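(* Let $\mathcal{R}=(\Sigma,V,\geq_s,\Delta)$ be the term rewriting system described in the context, let $\tau\in T[\Sigma,V]$, and let $\lambda$ be a mapping assigning to each affine symbol $f$ its affine constant $\lambda(f)$ (used as $c$ in rules R12, R13). Then the procedure TermNorm$(\mathcal{R},\tau,\lambda)$ described in the context returns a normal form $\tau'$ of $\tau$ (i.e. $\tau$ rewrites to $\tau'$ and no rule of $\Delta$ applies to $\tau'$).
   Context: $\mathbb{F}=\mathbb{GF}(2^n)$. Signature $\Sigma=\mathbb{F}\cup\{\oplus,\otimes,f_1,\dots,f_t\}$: elements of $\mathbb{F}$ are constants, $\oplus,\otimes$ binary (field addition and multiplication), $f_1,\dots,f_t$ unary symbols for affine transformations. $V$ is a set of variables, $\Sigma\cap V=\emptyset$, $\geq_s$ a total order on $V\uplus\Sigma$. Terms $T[\Sigma,V]$: smallest set containing $\mathbb{F}\cup V$ and closed under $\oplus$, $\otimes$, $f_j$; $T_{\backslash\oplus}(\Sigma,V)$ = terms not using $\oplus$. A factor is a term in $\mathbb{F}\cup V$ or of the form $f_i(\tau')$ with $\tau'\in T_{\backslash\oplus}(\Sigma,V)$; a monomial is a product $\alpha_1\otimes\cdots\otimes\alpha_k$ ($k\ge1$) of nonzero factors; a polynomial is a sum of monomials (sums and products treated as flat sequences). Factor order $\geq_l$: $\alpha\geq_l\alpha'$ iff (i) $\alpha,\alpha'\in\mathbb{F}\cup V$ and $\alpha\geq_s\alpha'$; or (ii) $\alpha=f(\tau)$, $\alpha'=f'(\tau')$ with $f\geq_s f'$, or $f=f'$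 and $\tau\geq_p\tau'$; or (iii) $\alpha=f(\tau)$ and $f\geq_s\alpha'$, or $\alpha'=f(\tau)$ and $\alpha\geq_s f$. Monomial order $\geq_p$: lexicographic comparison (w.r.t. $\geq_l$) of the factor sequences sorted in descending $\geq_l$-order. Rules $\Delta$ (with $\tau,\tau_1,\tau_2$ terms, $m_i$ monomials, $\alpha_i$ factors, $f$ an affine symbol with constant $c=\lambda(f)$): R1: $m_1\oplus\cdots\oplus m_k\mapsto m'_1\oplus\cdots\oplus m'_k$ where $(m'_1,\dots,m'_k)={\tt sort}_{\geq_p}(m_1,\dots,m_k)\neq(m_1,\dots,m_k)$; R2: $\alpha_1\cdots\alpha_k\mapsto\alpha'_1\cdots\alpha'_k$ where $(\alpha'_1,\dots,\alpha'_k)={\tt sort}_{\geq_l}(\alpha_1,\dots,\alpha_k)\neq(\alpha_1,\dots,\alpha_k)$; R3: $\tau\oplus\tau\mapsto0$; R4: $\tau\otimes0\mapsto0$; R5: $0\otimes\tau\mapsto0$; R6: $\tau\oplus0\mapsto\tau$; R7: $0\oplus\tau\mapsto\tau$; R8: $\tau\otimes1\mapsto\tau$; R9: $1\otimes\tau\mapsto\tau$; R10: $(\tau_1\oplus\tau_2)\otimes\tau\mapsto(\tau_1\otimes\tau)\oplus(\tau_2\otimes\tau)$; R11: $\tau\otimes(\tau_1\oplus\tau_2)\mapsto(\tau\otimes\tau_1)\oplus(\tau\otimes\tau_2)$; R12: $f(\tau_1\oplus\tau_2)\mapsto f(\tau_1)\oplus f(\tau_2)\oplus c$; R13: $f(0)\mapsto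 c$. A rewriting step replaces one occurrence of a subterm matching a left-hand side. Procedure TermNorm$(\mathcal{R},\tau,\lambda)$: (1) rewrite $\tau$ by iteratively applying rules R3–R13 until no more change; (2) sort the result by iteratively applying rule R2 (recursively, from innermost subterms); (3) sort the result by iteratively applying rule R1; (4) rewrite the result by iteratively applying rules R3, R6, R7 until no more change; (5) return the resulting term $\tau'$. *)

theory Defs
  imports Main "HOL-Library.Cardinality"
begin

datatype ('c, 'v, 'f) sym = SConst 'c | SVar 'v | SPlus | STimes | SAff 'f

text \<open>Terms T[Sigma,V]: Add = oplus, Mul = otimes, Aff f t = f(t).\<close>
datatype ('c, 'v, 'f) trm =
    Cst 'c | Var 'v
  | Add "('c, 'v, 'f) trm" "('c, 'v, 'f) trm"
  | Mul "('c, 'v, 'f) trm" "('c, 'v, 'f) trm"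
  | Aff 'f "('c, 'v, 'f) trm"

definition total_order_rel :: "('a \<Rightarrow> 'a \<Rightarrow> bool) \<Rightarrow> bool" where
  "total_order_rel r \<longleftrightarrow> (\<forall>x. r x x) \<and> (\<forall>x y. r x y \<and> r y x \<longrightarrow> x = y)
     \<and> (\<forall>x y z. r x y \<and> r y z \<longrightarrow> r x z) \<and> (\<forall>x y. r x y \<or> r y x)"

fun summands :: "('c, 'v, 'f) trm \<Rightarrow> ('c, 'v, 'f) trm list" where
  "summands (Add a b) = summands a @ summands b"
| "summands t = [t]"

fun factors :: "('c, 'v, 'f) trm \<Rightarrow> ('c, 'v, 'f) trm list" where
  "factors (Mul a b) = factors a @ factors b"
| "factors t = [t]"

fun mk_sum :: "('c::zero, 'v, 'f) trm list \<Rightarrow> ('c, 'v, 'f) trm" where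
  "mk_sum [] = Cst 0"
| "mk_sum [t] = t"
| "mk_sum (t # ts) = Add t (mk_sum ts)"

fun mk_prod :: "('c::one, 'v, 'f) trm list \<Rightarrow> ('c, 'v, 'f) trm" where
  "mk_prod [] = Cst 1"
| "mk_prod [t] = t"
| "mk_prod (t # ts) = Mul t (mk_prod ts)"

fun plus_free :: "('c, 'v, 'f) trm \<Rightarrow> bool" where
  "plus_free (Cst c) = True"
| "plus_free (Var v) = True"
| "plus_free (Add a b) = False"
| "plus_free (Mul a b) = (plus_free a \<and> plus_free b)"
| "plus_free (Aff f t) = plus_free t"

fun is_factor :: "('c, 'v, 'f) trm \<Rightarrow> bool" where
  "is_factor (Cst c) = True"
| "is_factor (Var v) = True"
| "is_factor (Aff f t) = plus_free t"
| "is_factor _ = False"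

definition is_monomial :: "('c::zero, 'v, 'f) trm \<Rightarrow> bool" where
  "is_monomial t \<longleftrightarrow> (\<forall>a\<in>set (factors t). is_factor a \<and> a \<noteq> Cst 0)"

fun insort_by :: "('a \<Rightarrow> 'a \<Rightarrow> bool) \<Rightarrow> 'a \<Rightarrow> 'a list \<Rightarrow> 'a list" where
  "insort_by ge x [] = [x]"
| "insort_by ge x (y # ys) = (if ge x y then x # y # ys else y # insort_by ge x ys)"

definition sort_by :: "('a \<Rightarrow> 'a \<Rightarrow> bool) \<Rightarrow> 'a list \<Rightarrow> 'a list" where
  "sort_by ge xs = foldr (insort_by ge) xs []"

fun lex_ge :: "('a \<Rightarrow> 'a \<Rightarrow> bool) \<Rightarrow> 'a list \<Rightarrow> 'a list \<Rightarrow> bool" where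
  "lex_ge ge [] [] = True"
| "lex_ge ge [] (y # ys) = False"
| "lex_ge ge (x # xs) [] = True"
| "lex_ge ge (x # xs) (y # ys) =
     (if ge x y \<and> \<not> ge y x then True
      else if ge x y \<and> ge y x then lex_ge ge xs ys else False)"

fun atom_sym :: "('c, 'v, 'f) trm \<Rightarrow> ('c, 'v, 'f) sym option" where
  "atom_sym (Cst c) = Some (SConst c)"
| "atom_sym (Var v) = Some (SVar v)"
| "atom_sym _ = None"

text \<open>The mutual recursion ge_l / ge_p is realised with a fuel parameter (the nesting
  depth of affine symbols); with sufficient fuel the value does not depend on it.\<close>
primrec ge_l_fuel :: "(('c, 'v, 'f) sym \<Rightarrow> ('c, 'v, 'f) sym \<Rightarrow> bool) \<Rightarrow> nat
    \<Rightarrow> ('c, 'v, 'f) trm \<Rightarrow> ('c, 'v, 'f) trm \<Rightarrow> bool" where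
  "ge_l_fuel ges 0 a b = False"
| "ge_l_fuel ges (Suc n) a b =
     (case (a, b) of
        (Aff f t, Aff g u) \<Rightarrow>
           (f \<noteq> g \<and> ges (SAff f) (SAff g))
         \<or> (f = g \<and> lex_ge (ge_l_fuel ges n) (sort_by (ge_l_fuel ges n) (factors t))
                                            (sort_by (ge_l_fuel ges n) (factors u)))
      | (Aff f t, _) \<Rightarrow> (case atom_sym b of Some s \<Rightarrow> ges (SAff f) s | None \<Rightarrow> False)
      | (_, Aff g u) \<Rightarrow> (case atom_sym a of Some s \<Rightarrow> ges s (SAff g) | None \<Rightarrow> False)
      | _ \<Rightarrow> (case (atom_sym a, atom_sym b) of
                (Some s, Some s') \<Rightarrow> ges s s'
              | _ \<Rightarrow> False))"

definition ge_l :: "(('c, 'v, 'f) sym \<Rightarrow> ('c, 'v, 'f) sym \<Rightarrow> bool)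
    \<Rightarrow> ('c, 'v, 'f) trm \<Rightarrow> ('c, 'v, 'f) trm \<Rightarrow> bool" where
  "ge_l ges a b = ge_l_fuel ges (size a + size b) a b"

definition ge_p :: "(('c, 'v, 'f) sym \<Rightarrow> ('c, 'v, 'f) sym \<Rightarrow> bool)
    \<Rightarrow> ('c, 'v, 'f) trm \<Rightarrow> ('c, 'v, 'f) trm \<Rightarrow> bool" where
  "ge_p ges s t = lex_ge (ge_l ges) (sort_by (ge_l ges) (factors s)) (sort_by (ge_l ges) (factors t))"

definition rule :: "(('c::field, 'v, 'f) sym \<Rightarrow> ('c, 'v, 'f) sym \<Rightarrow> bool) \<Rightarrow> ('f \<Rightarrow> 'c)
    \<Rightarrow> nat \<Rightarrow> ('c, 'v, 'f) trm \<Rightarrow> ('c, 'v, 'f) trm \<Rightarrow> bool" where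
  "rule ges lam i s t \<longleftrightarrow>
     (i = 1 \<and> (\<forall>m\<in>set (summands s). is_monomial m)
            \<and> sort_by (ge_p ges) (summands s) \<noteq> summands s
            \<and> t = mk_sum (sort_by (ge_p ges) (summands s)))
   \<or> (i = 2 \<and> (\<forall>a\<in>set (factors s). is_factor a)
            \<and> sort_by (ge_l ges) (factors s) \<noteq> factors s
            \<and> t = mk_prod (sort_by (ge_l ges) (factors s)))
   \<or> (i = 3 \<and> (\<exists>u. s = Add u u) \<and> t = Cst 0)
   \<or> (i = 4 \<and> (\<exists>u. s = Mul u (Cst 0)) \<and> t = Cst 0)
   \<or> (i = 5 \<and> (\<exists>u. s = Mul (Cst 0) u) \<and> t = Cst 0)
   \<or> (i = 6 \<and> s = Add t (Cst 0))
   \<or> (i = 7 \<and> s = Add (Cst 0) t)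
   \<or> (i = 8 \<and> s = Mul t (Cst 1))
   \<or> (i = 9 \<and> s = Mul (Cst 1) t)
   \<or> (i = 10 \<and> (\<exists>u1 u2 u. s = Mul (Add u1 u2) u \<and> t = Add (Mul u1 u) (Mul u2 u)))
   \<or> (i = 11 \<and> (\<exists>u u1 u2. s = Mul u (Add u1 u2) \<and> t = Add (Mul u u1) (Mul u u2)))
   \<or> (i = 12 \<and> (\<exists>f u1 u2. s = Aff f (Add u1 u2)
                    \<and> t = Add (Add (Aff f u1) (Aff f u2)) (Cst (lam f))))
   \<or> (i = 13 \<and> (\<exists>f. s = Aff f (Cst 0) \<and> t = Cst (lam f)))"

definition rules :: "(('c::field, 'v, 'f) sym \<Rightarrow> ('c, 'v, 'f) sym \<Rightarrow> bool) \<Rightarrow> ('f \<Rightarrow> 'c)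
    \<Rightarrow> nat set \<Rightarrow> ('c, 'v, 'f) trm \<Rightarrow> ('c, 'v, 'f) trm \<Rightarrow> bool" where
  "rules ges lam I s t \<longleftrightarrow> (\<exists>i\<in>I. rule ges lam i s t)"

inductive aeq :: "('c, 'v, 'f) trm \<Rightarrow> ('c, 'v, 'f) trm \<Rightarrow> bool" where
  aeq_refl: "aeq s s"
| aeq_sym: "aeq s t \<Longrightarrow> aeq t s"
| aeq_trans: "aeq s t \<Longrightarrow> aeq t u \<Longrightarrow> aeq s u"
| aeq_assoc_add: "aeq (Add (Add a b) c) (Add a (Add b c))"
| aeq_assoc_mul: "aeq (Mul (Mul a b) c) (Mul a (Mul b c))"
| aeq_add: "aeq a a' \<Longrightarrow> aeq b b' \<Longrightarrow> aeq (Add a b) (Add a' b')"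
| aeq_mul: "aeq a a' \<Longrightarrow> aeq b b' \<Longrightarrow> aeq (Mul a b) (Mul a' b')"
| aeq_aff: "aeq a a' \<Longrightarrow> aeq (Aff f a) (Aff f a')"

inductive ctx_step :: "(('c, 'v, 'f) trm \<Rightarrow> ('c, 'v, 'f) trm \<Rightarrow> bool)
    \<Rightarrow> ('c, 'v, 'f) trm \<Rightarrow> ('c, 'v, 'f) trm \<Rightarrow> bool" for R where
  root: "R s t \<Longrightarrow> ctx_step R s t"
| add_l: "ctx_step R s t \<Longrightarrow> ctx_step R (Add s u) (Add t u)"
| add_r: "ctx_step R s t \<Longrightarrow> ctx_step R (Add u s) (Add u t)"
| mul_l: "ctx_step R s t \<Longrightarrow> ctx_step R (Mul s u) (Mul t u)"
| mul_r: "ctx_step R s t \<Longrightarrow> ctx_step R (Mul u s) (Mul u t)"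
| aff: "ctx_step R s t \<Longrightarrow> ctx_step R (Aff f s) (Aff f t)"

text \<open>One rewriting step: replace one occurrence of a redex, terms taken modulo
  associativity of oplus and otimes (flat sequences).\<close>
definition rstep :: "(('c, 'v, 'f) trm \<Rightarrow> ('c, 'v, 'f) trm \<Rightarrow> bool)
    \<Rightarrow> ('c, 'v, 'f) trm \<Rightarrow> ('c, 'v, 'f) trm \<Rightarrow> bool" where
  "rstep R s t \<longleftrightarrow> (\<exists>s' t'. aeq s s' \<and> ctx_step R s' t' \<and> aeq t' t)"

definition is_nf :: "(('c, 'v, 'f) trm \<Rightarrow> ('c, 'v, 'f) trm \<Rightarrow> bool)
    \<Rightarrow> ('c, 'v, 'f) trm \<Rightarrow> bool" where
  "is_nf R s \<longleftrightarrow> \<not> (\<exists>t. rstep R s t)"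

abbreviation Delta where "Delta ges lam \<equiv> rules ges lam {1..13}"

section \<open>The procedure TermNorm (as an input/output relation over all runs)\<close>

text \<open>R2 applied innermost: the factors of the redex are already R2-sorted.\<close>
definition rule2_inner where
  "rule2_inner ges lam s t \<longleftrightarrow> rule ges lam 2 s t
     \<and> (\<forall>a\<in>set (factors s). is_nf (rules ges lam {2}) a)"

definition term_norm :: "(('c::field, 'v, 'f) sym \<Rightarrow> ('c, 'v, 'f) sym \<Rightarrow> bool) \<Rightarrow> ('f \<Rightarrow> 'c)
    \<Rightarrow> ('c, 'v, 'f) trm \<Rightarrow> ('c, 'v, 'f) trm \<Rightarrow> bool" where
  "term_norm ges lam \<tau> \<tau>' \<longleftrightarrow>
     (\<exists>\<tau>1 \<tau>2 \<tau>3.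
        (rstep (rules ges lam {3..13}))\<^sup>*\<^sup>* \<tau> \<tau>1 \<and> is_nf (rules ges lam {3..13}) \<tau>1
      \<and> (rstep (rule2_inner ges lam))\<^sup>*\<^sup>* \<tau>1 \<tau>2 \<and> is_nf (rule2_inner ges lam) \<tau>2
      \<and> (rstep (rules ges lam {1}))\<^sup>*\<^sup>* \<tau>2 \<tau>3 \<and> is_nf (rules ges lam {1}) \<tau>3
      \<and> (rstep (rules ges lam {3, 6, 7}))\<^sup>*\<^sup>* \<tau>3 \<tau>' \<and> is_nf (rules ges lam {3, 6, 7}) \<tau>')"

end

theory Submission
  imports Defs
begin


section \<open>Canonical forms modulo associativity\<close>

fun app_add where
  "app_add (Add p q) y = Add p (app_add q y)"
| "app_add x y = Add x y"
fun app_mul where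
  "app_mul (Mul p q) y = Mul p (app_mul q y)"
| "app_mul x y = Mul x y"
fun nrm where
  "nrm (Cst c) = Cst c" | "nrm (Var v) = Var v"
| "nrm (Add a b) = app_add (nrm a) (nrm b)"
| "nrm (Mul a b) = app_mul (nrm a) (nrm b)"
| "nrm (Aff f a) = Aff f (nrm a)"

fun isAdd where "isAdd (Add a b) = True" | "isAdd _ = False"
fun isMul where "isMul (Mul a b) = True" | "isMul _ = False"

lemma app_add_assoc: "app_add (app_add x y) z = app_add x (app_add y z)"
  by (induction x y rule: app_add.induct) auto
lemma app_mul_assoc: "app_mul (app_mul x y) z = app_mul x (app_mul y z)"
  by (induction x y rule: app_mul.induct) auto

lemma aeq_nrm: "aeq s t \<Longrightarrow> nrm s = nrm t"
  by (induction rule: aeq.induct) (auto simp: app_add_assoc app_mul_assoc)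

lemma aeq_app_add: "aeq (Add x y) (app_add x y)"
proof (induction x y rule: app_add.induct)
  case (1 p q y)
  then show ?case using aeq_assoc_add aeq_add aeq_refl aeq_trans by fastforce
qed (auto intro: aeq_refl)

lemma aeq_app_mul: "aeq (Mul x y) (app_mul x y)"
proof (induction x y rule: app_mul.induct)
  case (1 p q y)
  then show ?case using aeq_assoc_mul aeq_mul aeq_refl aeq_trans by fastforce
qed (auto intro: aeq_refl)

lemma aeq_to_nrm: "aeq s (nrm s)"
proof (induction s)
  case (Add a b) then show ?case using aeq_add aeq_app_add aeq_trans by fastforce
next
  case (Mul a b) then show ?case using aeq_mul aeq_app_mul aeq_trans by fastforce
next
  case (Aff f a) then show ?case using aeq_aff by fastforce
qed (auto intro: aeq_refl)

lemma aeq_iff: "aeq s t \<longleftrightarrow> nrm s = nrm t"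
  using aeq_nrm aeq_to_nrm aeq_sym aeq_trans by metis

lemma app_add_isAdd[simp]: "isAdd (app_add x y)" "\<not> isMul (app_add x y)"
  by (induction x y rule: app_add.induct) auto
lemma app_mul_isMul[simp]: "isMul (app_mul x y)" "\<not> isAdd (app_mul x y)"
  by (induction x y rule: app_mul.induct) auto

lemma isAdd_nrm[simp]: "isAdd (nrm s) = isAdd s"
  by (cases s) auto
lemma isMul_nrm[simp]: "isMul (nrm s) = isMul s"
  by (cases s) auto

lemma summands_nonAdd: "\<not> isAdd s \<Longrightarrow> summands s = [s]"
  by (cases s) auto
lemma factors_nonMul: "\<not> isMul s \<Longrightarrow> factors s = [s]"
  by (cases s) auto

lemma summands_app_add: "summands (app_add x y) = summands x @ summands y"
  by (induction x y rule: app_add.induct) auto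
lemma factors_app_mul: "factors (app_mul x y) = factors x @ factors y"
  by (induction x y rule: app_mul.induct) auto

lemma summands_nrm: "summands (nrm s) = map nrm (summands s)"
  by (induction s) (auto simp: summands_app_add summands_nonAdd)
lemma factors_nrm: "factors (nrm s) = map nrm (factors s)"
  by (induction s) (auto simp: factors_app_mul factors_nonMul)

lemma summands_elem: "x \<in> set (summands s) \<Longrightarrow> \<not> isAdd x"
  by (induction s rule: summands.induct) auto
lemma factors_elem: "x \<in> set (factors s) \<Longrightarrow> \<not> isMul x"
  by (induction s rule: factors.induct) auto
lemma summands_ne[simp]: "summands s \<noteq> []"
  by (induction s rule: summands.induct) auto
lemma factors_ne[simp]: "factors s \<noteq> []"
  by (induction s rule: factors.induct) auto

lemma summands_mk_sum: "L \<noteq> [] \<Longrightarrow> summands (mk_sum L) = concat (map summands L)"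
  by (induction L rule: mk_sum.induct) auto
lemma factors_mk_prod: "L \<noteq> [] \<Longrightarrow> factors (mk_prod L) = concat (map factors L)"
  by (induction L rule: mk_prod.induct) auto

lemma concat_summands_id: "(\<forall>x\<in>set L. \<not> isAdd x) \<Longrightarrow> concat (map summands L) = L"
  by (induction L) (auto simp: summands_nonAdd)
lemma concat_factors_id: "(\<forall>x\<in>set L. \<not> isMul x) \<Longrightarrow> concat (map factors L) = L"
  by (induction L) (auto simp: factors_nonMul)

lemma app_add_mk_sum: "A \<noteq> [] \<Longrightarrow> B \<noteq> [] \<Longrightarrow> (\<forall>x\<in>set A. \<not> isAdd x) \<Longrightarrow>
   app_add (mk_sum A) (mk_sum B) = mk_sum (A @ B)"
proof (induction A rule: mk_sum.induct)
  case (2 t) then show ?case by (cases t; cases B) auto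
next
  case (3 t v va) then show ?case by (cases t; cases B) auto
qed auto

lemma app_mul_mk_prod: "A \<noteq> [] \<Longrightarrow> B \<noteq> [] \<Longrightarrow> (\<forall>x\<in>set A. \<not> isMul x) \<Longrightarrow>
   app_mul (mk_prod A) (mk_prod B) = mk_prod (A @ B)"
proof (induction A rule: mk_prod.induct)
  case (2 t) then show ?case by (cases t; cases B) auto
next
  case (3 t v va) then show ?case by (cases t; cases B) auto
qed auto

lemma nrm_mk_sum: "nrm s = mk_sum (map nrm (summands s))"
proof (induction s)
  case (Add a b)
  have "nrm (Add a b) = app_add (mk_sum (map nrm (summands a))) (mk_sum (map nrm (summands b)))"
    using Add by simp
  also have "\<dots> = mk_sum (map nrm (summands a) @ map nrm (summands b))"
    by (rule app_add_mk_sum) (auto dest: summands_elem)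
  finally show ?case by simp
qed auto

lemma nrm_mk_prod: "nrm s = mk_prod (map nrm (factors s))"
proof (induction s)
  case (Mul a b)
  have "nrm (Mul a b) = app_mul (mk_prod (map nrm (factors a))) (mk_prod (map nrm (factors b)))"
    using Mul by simp
  also have "\<dots> = mk_prod (map nrm (factors a) @ map nrm (factors b))"
    by (rule app_mul_mk_prod) (auto dest: factors_elem)
  finally show ?case by simp
qed auto

lemma nrm_nrm[simp]: "nrm (nrm s) = nrm s"
  by (metis aeq_iff aeq_sym aeq_to_nrm)

lemma app_add_ne_Cst[simp]: "app_add x y \<noteq> Cst c"
  by (induction x y rule: app_add.induct) auto
lemma app_mul_ne_Cst[simp]: "app_mul x y \<noteq> Cst c"
  by (induction x y rule: app_mul.induct) auto
lemma nrm_eq_Cst[simp]: "nrm s = Cst c \<longleftrightarrow> s = Cst c"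
  by (cases s) auto

lemma nrm_eq_by_summands: "map nrm (summands (s::('c::zero,'v,'f) trm)) = map nrm (summands t) \<Longrightarrow> nrm s = nrm t"
  using nrm_mk_sum[of s] nrm_mk_sum[of t] by (simp only:)
lemma nrm_eq_by_factors: "map nrm (factors (s::('c::one,'v,'f) trm)) = map nrm (factors t) \<Longrightarrow> nrm s = nrm t"
  using nrm_mk_prod[of s] nrm_mk_prod[of t] by (simp only:)

lemma size_app_add: "size (app_add x y) = size x + size y + 1"
  by (induction x y rule: app_add.induct) auto

lemma rstep_add_l: "rstep R a b \<Longrightarrow> rstep R (Add a c) (Add b c)"
  unfolding rstep_def by (blast intro: aeq_add aeq_refl ctx_step.add_l)
lemma rstep_add_r: "rstep R a b \<Longrightarrow> rstep R (Add c a) (Add c b)"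
  unfolding rstep_def by (blast intro: aeq_add aeq_refl ctx_step.add_r)
lemma rstep_mul_l: "rstep R a b \<Longrightarrow> rstep R (Mul a c) (Mul b c)"
  unfolding rstep_def by (blast intro: aeq_mul aeq_refl ctx_step.mul_l)
lemma rstep_mul_r: "rstep R a b \<Longrightarrow> rstep R (Mul c a) (Mul c b)"
  unfolding rstep_def by (blast intro: aeq_mul aeq_refl ctx_step.mul_r)
lemma rstep_aff: "rstep R a b \<Longrightarrow> rstep R (Aff f a) (Aff f b)"
  unfolding rstep_def by (blast intro: aeq_aff ctx_step.aff)
lemma rstep_root: "R a b \<Longrightarrow> rstep R a b"
  unfolding rstep_def by (blast intro: aeq_refl ctx_step.root)

lemma rtrancl_lift:
  assumes "\<And>a b. r a b \<Longrightarrow> r (f a) (f b)" "r\<^sup>*\<^sup>* a b" shows "r\<^sup>*\<^sup>* (f a) (f b)"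
  using assms(2) by induction (auto intro: rtranclp.rtrancl_into_rtrancl assms(1))

lemma rsteps_add: "(rstep R)\<^sup>*\<^sup>* a b \<Longrightarrow> (rstep R)\<^sup>*\<^sup>* c d \<Longrightarrow> (rstep R)\<^sup>*\<^sup>* (Add a c) (Add b d)"
proof -
  assume 1: "(rstep R)\<^sup>*\<^sup>* a b" and 2: "(rstep R)\<^sup>*\<^sup>* c d"
  have "(rstep R)\<^sup>*\<^sup>* (Add a c) (Add b c)" by (rule rtrancl_lift[OF _ 1, of "\<lambda>x. Add x c"]) (rule rstep_add_l)
  moreover have "(rstep R)\<^sup>*\<^sup>* (Add b c) (Add b d)" by (rule rtrancl_lift[OF _ 2, of "\<lambda>x. Add b x"]) (rule rstep_add_r)
  ultimately show ?thesis by simp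
qed
lemma rsteps_mul: "(rstep R)\<^sup>*\<^sup>* a b \<Longrightarrow> (rstep R)\<^sup>*\<^sup>* c d \<Longrightarrow> (rstep R)\<^sup>*\<^sup>* (Mul a c) (Mul b d)"
proof -
  assume 1: "(rstep R)\<^sup>*\<^sup>* a b" and 2: "(rstep R)\<^sup>*\<^sup>* c d"
  have "(rstep R)\<^sup>*\<^sup>* (Mul a c) (Mul b c)" by (rule rtrancl_lift[OF _ 1, of "\<lambda>x. Mul x c"]) (rule rstep_mul_l)
  moreover have "(rstep R)\<^sup>*\<^sup>* (Mul b c) (Mul b d)" by (rule rtrancl_lift[OF _ 2, of "\<lambda>x. Mul b x"]) (rule rstep_mul_r)
  ultimately show ?thesis by simp
qed
lemma rsteps_aff: "(rstep R)\<^sup>*\<^sup>* a b \<Longrightarrow> (rstep R)\<^sup>*\<^sup>* (Aff f a) (Aff f b)"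
  by (rule rtrancl_lift[of "rstep R" "Aff f"]) (rule rstep_aff)

lemma nf_add: "is_nf R (Add a b) \<Longrightarrow> is_nf R a \<and> is_nf R b"
  unfolding is_nf_def using rstep_add_l rstep_add_r by blast
lemma nf_mul: "is_nf R (Mul a b) \<Longrightarrow> is_nf R a \<and> is_nf R b"
  unfolding is_nf_def using rstep_mul_l rstep_mul_r by blast
lemma nf_aff: "is_nf R (Aff f a) \<Longrightarrow> is_nf R a"
  unfolding is_nf_def using rstep_aff by metis
lemma nf_root: "is_nf R a \<Longrightarrow> \<not> R a b"
  unfolding is_nf_def using rstep_root by blast

lemma ctx_mono: "ctx_step R s t \<Longrightarrow> (\<And>a b. R a b \<Longrightarrow> R' a b) \<Longrightarrow> ctx_step R' s t"
  by (induction rule: ctx_step.induct) (auto intro: ctx_step.intros)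
lemma rstep_mono: "rstep R s t \<Longrightarrow> (\<And>a b. R a b \<Longrightarrow> R' a b) \<Longrightarrow> rstep R' s t"
  unfolding rstep_def using ctx_mono by blast
lemma rsteps_mono: "(rstep R)\<^sup>*\<^sup>* s t \<Longrightarrow> (\<And>a b. R a b \<Longrightarrow> R' a b) \<Longrightarrow> (rstep R')\<^sup>*\<^sup>* s t"
  by (induction rule: rtranclp_induct) (auto intro: rtranclp.rtrancl_into_rtrancl rstep_mono)
lemma nf_mono: "is_nf R' s \<Longrightarrow> (\<And>a b. R a b \<Longrightarrow> R' a b) \<Longrightarrow> is_nf R s"
  unfolding is_nf_def using rstep_mono by blast

lemma nf_by_inv:
  assumes aeqI: "\<And>s s'. aeq s s' \<Longrightarrow> P s \<Longrightarrow> P s'"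
    and addI: "\<And>a b. P (Add a b) \<Longrightarrow> P a \<and> P b"
    and mulI: "\<And>a b. P (Mul a b) \<Longrightarrow> P a \<and> P b"
    and affI: "\<And>f a. P (Aff f a) \<Longrightarrow> P a"
    and rootI: "\<And>s t. P s \<Longrightarrow> R s t \<Longrightarrow> False"
    and "P s"
  shows "is_nf R s"
proof -
  have "ctx_step R s' t' \<Longrightarrow> P s' \<Longrightarrow> False" for s' t'
    by (induction rule: ctx_step.induct) (use addI mulI affI rootI in blast)+
  then show ?thesis unfolding is_nf_def rstep_def using aeqI \<open>P s\<close> by blast
qed

lemma inv_rstep:
  assumes aeqI: "\<And>s s'. aeq s s' \<Longrightarrow> P s \<Longrightarrow> P s'"
    and ctxI: "\<And>s t. ctx_step R s t \<Longrightarrow> P s \<Longrightarrow> P t"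
  shows "(rstep R)\<^sup>*\<^sup>* s t \<Longrightarrow> P s \<Longrightarrow> P t"
proof (induction rule: rtranclp_induct)
  case (step y z)
  then show ?case unfolding rstep_def using aeqI ctxI by blast
qed

lemma nf_exists:
  assumes "\<And>s t. rstep R s t \<Longrightarrow> (meas t :: nat) < meas s"
  shows "\<exists>t. (rstep R)\<^sup>*\<^sup>* s t \<and> is_nf R t"
proof (induction s rule: measure_induct_rule[of meas])
  case (less s)
  show ?case
  proof (cases "is_nf R s")
    case True then show ?thesis by blast
  next
    case False
    then obtain t where "rstep R s t" unfolding is_nf_def by blast
    with less assms[OF this] obtain u where "(rstep R)\<^sup>*\<^sup>* t u" "is_nf R u" by blast
    with \<open>rstep R s t\<close> show ?thesis by (meson converse_rtranclp_into_rtranclp)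
  qed
qed

lemma ctx_in_mk_sum: "R u v \<Longrightarrow> ctx_step R (mk_sum (A @ [u] @ B)) (mk_sum (A @ [v] @ B))"
proof (induction A)
  case Nil then show ?case by (cases B) (auto intro: ctx_step.intros)
next
  case (Cons a A) then show ?case by (cases "A @ [u] @ B"; cases "A @ [v] @ B") (auto intro: ctx_step.intros)
qed



section \<open>Sorting and lexicographic order, generically\<close>

definition tpo :: "'a set \<Rightarrow> ('a \<Rightarrow> 'a \<Rightarrow> bool) \<Rightarrow> bool" where
  "tpo A ge \<longleftrightarrow> (\<forall>x\<in>A. ge x x) \<and> (\<forall>x\<in>A. \<forall>y\<in>A. ge x y \<or> ge y x)
     \<and> (\<forall>x\<in>A. \<forall>y\<in>A. \<forall>z\<in>A. ge x y \<longrightarrow> ge y z \<longrightarrow> ge x z)"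

lemma tpo_refl: "tpo A ge \<Longrightarrow> x \<in> A \<Longrightarrow> ge x x"
  unfolding tpo_def by blast
lemma tpo_total: "tpo A ge \<Longrightarrow> x \<in> A \<Longrightarrow> y \<in> A \<Longrightarrow> ge x y \<or> ge y x"
  unfolding tpo_def by blast
lemma tpo_trans: "tpo A ge \<Longrightarrow> x \<in> A \<Longrightarrow> y \<in> A \<Longrightarrow> z \<in> A \<Longrightarrow> ge x y \<Longrightarrow> ge y z \<Longrightarrow> ge x z"
  unfolding tpo_def by blast

lemma tpo_mono: "tpo A ge \<Longrightarrow> B \<subseteq> A \<Longrightarrow> tpo B ge"
  unfolding tpo_def by blast

lemma set_insort[simp]: "set (insort_by ge x L) = insert x (set L)"
  by (induction L) auto
lemma set_sort[simp]: "set (sort_by ge L) = set L"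
  by (induction L) (auto simp: sort_by_def)
lemma length_insort[simp]: "length (insort_by ge x L) = Suc (length L)"
  by (induction L) auto
lemma length_sort[simp]: "length (sort_by ge L) = length L"
  by (induction L) (auto simp: sort_by_def)
lemma sort_Cons: "sort_by ge (x # L) = insort_by ge x (sort_by ge L)"
  by (simp add: sort_by_def)
lemma sort_Nil[simp]: "sort_by ge [] = []"
  by (simp add: sort_by_def)

lemma sorted_insort:
  assumes "tpo A ge" "x \<in> A" "set L \<subseteq> A" "sorted_wrt ge L"
  shows "sorted_wrt ge (insort_by ge x L)"
  using assms(3,4)
proof (induction L)
  case (Cons y L)
  show ?case
  proof (cases "ge x y")
    case True
    have "\<forall>z\<in>set L. ge y z" using Cons.prems by simp
    then have "\<forall>z\<in>set L. ge x z" using True tpo_trans[OF assms(1) assms(2)] Cons.prems(1) by auto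
    with True Cons.prems show ?thesis by simp
  next
    case False
    then have yx: "ge y x" using tpo_total[OF assms(1) assms(2), of y] Cons.prems by auto
    have "sorted_wrt ge (insort_by ge x L)" using Cons by simp
    moreover have "\<forall>z\<in>set L. ge y z" using Cons.prems by simp
    ultimately show ?thesis using False yx by simp
  qed
qed simp

lemma sorted_sort: "tpo A ge \<Longrightarrow> set L \<subseteq> A \<Longrightarrow> sorted_wrt ge (sort_by ge L)"
proof (induction L)
  case (Cons a L)
  then show ?case using sorted_insort[of A ge a "sort_by ge L"] by (simp add: sort_Cons)
qed simp

lemma sort_sorted: "sorted_wrt ge L \<Longrightarrow> sort_by ge L = L"
proof (induction L)
  case (Cons x L)
  then show ?case by (cases L) (auto simp: sort_Cons)
qed simp

lemma sort_id_iff: "tpo A ge \<Longrightarrow> set L \<subseteq> A \<Longrightarrow> sort_by ge L = L \<longleftrightarrow> sorted_wrt ge L"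
  using sorted_sort sort_sorted by metis

lemma insort_cong: "(\<forall>y\<in>set L. ge x y = ge' x y) \<Longrightarrow> insort_by ge x L = insort_by ge' x L"
  by (induction L) auto

lemma sort_cong: "(\<forall>x\<in>set L. \<forall>y\<in>set L. ge x y = ge' x y) \<Longrightarrow> sort_by ge L = sort_by ge' L"
proof (induction L)
  case (Cons x L)
  then have "sort_by ge L = sort_by ge' L" by auto
  moreover have "insort_by ge x (sort_by ge' L) = insort_by ge' x (sort_by ge' L)"
    using Cons.prems by (intro insort_cong) auto
  ultimately show ?case by (simp add: sort_Cons)
qed simp

lemma insort_map: "(\<forall>y\<in>set L. ge (f x) (f y) = ge x y) \<Longrightarrow>
  insort_by ge (f x) (map f L) = map f (insort_by ge x L)"
  by (induction L) auto

lemma sort_map: "(\<forall>x\<in>set L. \<forall>y\<in>set L. ge (f x) (f y) = ge x y) \<Longrightarrow>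
  sort_by ge (map f L) = map f (sort_by ge L)"
proof (induction L)
  case (Cons x L)
  then have "sort_by ge (map f L) = map f (sort_by ge L)" by auto
  then show ?case using Cons.prems by (simp add: sort_Cons insort_map)
qed simp

lemma lex_cong: "(\<forall>x\<in>set xs. \<forall>y\<in>set ys. ge x y = ge' x y \<and> ge y x = ge' y x) \<Longrightarrow>
  lex_ge ge xs ys = lex_ge ge' xs ys"
  by (induction ge xs ys rule: lex_ge.induct) auto

lemma lex_map: "(\<forall>x\<in>set xs. \<forall>y\<in>set ys. ge (f x) (f y) = ge x y \<and> ge (f y) (f x) = ge y x) \<Longrightarrow>
  lex_ge ge (map f xs) (map f ys) = lex_ge ge xs ys"
  by (induction ge xs ys rule: lex_ge.induct) auto

lemma lex_tie: "lex_ge ge xs ys \<Longrightarrow> lex_ge ge ys xs \<Longrightarrow> list_all2 (\<lambda>x y. ge x y \<and> ge y x) xs ys"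
  by (induction ge xs ys rule: lex_ge.induct) (auto split: if_splits)

lemma lex_refl: "(\<forall>x\<in>set xs. ge x x) \<Longrightarrow> lex_ge ge xs xs"
  by (induction xs) auto

lemma lex_total: "tpo A ge \<Longrightarrow> set xs \<subseteq> A \<Longrightarrow> set ys \<subseteq> A \<Longrightarrow> lex_ge ge xs ys \<or> lex_ge ge ys xs"
proof (induction xs arbitrary: ys)
  case Nil then show ?case by (cases ys) auto
next
  case (Cons x xs)
  show ?case
  proof (cases ys)
    case (Cons y ys')
    have "lex_ge ge xs ys' \<or> lex_ge ge ys' xs" using Cons.IH[of ys'] \<open>ys = y # ys'\<close> Cons.prems by simp
    moreover have "ge x y \<or> ge y x" using tpo_total[OF Cons.prems(1), of x y] \<open>ys = y # ys'\<close> Cons.prems by simp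
    ultimately show ?thesis using \<open>ys = y # ys'\<close> by auto
  qed simp
qed

lemma lex_Cons_iff: "lex_ge ge (x # xs) (y # ys) \<longleftrightarrow> (ge x y \<and> \<not> ge y x) \<or> (ge x y \<and> ge y x \<and> lex_ge ge xs ys)"
  by auto

lemma lex_trans: "tpo A ge \<Longrightarrow> set xs \<subseteq> A \<Longrightarrow> set ys \<subseteq> A \<Longrightarrow> set zs \<subseteq> A \<Longrightarrow>
  lex_ge ge xs ys \<Longrightarrow> lex_ge ge ys zs \<Longrightarrow> lex_ge ge xs zs"
proof (induction xs arbitrary: ys zs)
  case Nil then show ?case by (cases ys; cases zs) auto
next
  case (Cons x xs)
  show ?case
  proof (cases ys)
    case Nil then show ?thesis using Cons by (cases zs) auto
  next
    case Cons1: (Cons y ys')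
    show ?thesis
    proof (cases zs)
      case Nil then show ?thesis by simp
    next
      case (Cons z zs')
      have xyz: "x \<in> A" "y \<in> A" "z \<in> A" using Cons.prems Cons1 Cons by auto
      have IH: "lex_ge ge xs ys' \<Longrightarrow> lex_ge ge ys' zs' \<Longrightarrow> lex_ge ge xs zs'"
        using Cons.IH[of ys' zs'] Cons.prems(1-4) Cons1 Cons by simp
      from tpo_trans[OF Cons.prems(1)] tpo_total[OF Cons.prems(1)] xyz have t: "ge x y \<Longrightarrow> ge y z \<Longrightarrow> ge x z" "ge x y \<or> ge y x" "ge y z \<or> ge z y" "ge x z \<or> ge z x"
        "ge y x \<Longrightarrow> ge x z \<Longrightarrow> ge y z" "ge z y \<Longrightarrow> ge y x \<Longrightarrow> ge z x" "ge x z \<Longrightarrow> ge z y \<Longrightarrow> ge x y"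
        "ge y z \<Longrightarrow> ge z x \<Longrightarrow> ge y x" "ge z x \<Longrightarrow> ge x y \<Longrightarrow> ge z y"
        by metis+
      have p1: "(ge x y \<and> \<not> ge y x) \<or> (ge x y \<and> ge y x \<and> lex_ge ge xs ys')"
        using Cons.prems(5) Cons1 by (simp only: lex_Cons_iff)
      have p2: "(ge y z \<and> \<not> ge z y) \<or> (ge y z \<and> ge z y \<and> lex_ge ge ys' zs')"
        using Cons.prems(6) Cons1 Cons by (simp only: lex_Cons_iff)
      have "(ge x z \<and> \<not> ge z x) \<or> (ge x z \<and> ge z x \<and> lex_ge ge xs zs')"
        using p1 p2 IH t(1,5,6,7,8,9) by meson
      then show ?thesis using Cons by (simp only: lex_Cons_iff)
    qed
  qed
qed

lemma tpo_lex: "tpo A ge \<Longrightarrow> tpo {xs. set xs \<subseteq> A} (lex_ge ge)"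
proof -
  assume t: "tpo A ge"
  have r1: "\<forall>x\<in>{xs. set xs \<subseteq> A}. lex_ge ge x x"
  proof
    fix x assume "x \<in> {xs. set xs \<subseteq> A}"
    then have "\<forall>y\<in>set x. ge y y" using t unfolding tpo_def by blast
    then show "lex_ge ge x x" by (rule lex_refl)
  qed
  have r2: "\<forall>x\<in>{xs. set xs \<subseteq> A}. \<forall>y\<in>{xs. set xs \<subseteq> A}. lex_ge ge x y \<or> lex_ge ge y x"
    using lex_total[OF t] by (simp only: mem_Collect_eq Ball_def) iprover
  have r3: "\<forall>x\<in>{xs. set xs \<subseteq> A}. \<forall>y\<in>{xs. set xs \<subseteq> A}. \<forall>z\<in>{xs. set xs \<subseteq> A}.
     lex_ge ge x y \<longrightarrow> lex_ge ge y z \<longrightarrow> lex_ge ge x z"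
    using lex_trans[OF t] by (simp only: mem_Collect_eq Ball_def) iprover
  show ?thesis unfolding tpo_def using r1 r2 r3 by (intro conjI)
qed



section \<open>The factor order\<close>

lemma tor_refl: "total_order_rel ges \<Longrightarrow> ges x x" unfolding total_order_rel_def by blast
lemma tor_antisym: "total_order_rel ges \<Longrightarrow> ges x y \<Longrightarrow> ges y x \<Longrightarrow> x = y" unfolding total_order_rel_def by blast
lemma tor_trans: "total_order_rel ges \<Longrightarrow> ges x y \<Longrightarrow> ges y z \<Longrightarrow> ges x z" unfolding total_order_rel_def by blast
lemma tor_total: "total_order_rel ges \<Longrightarrow> ges x y \<or> ges y x" unfolding total_order_rel_def by blast

fun dep :: "('c, 'v, 'f) trm \<Rightarrow> nat" where
  "dep (Cst c) = 0" | "dep (Var v) = 0" | "dep (Add a b) = max (dep a) (dep b)"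
| "dep (Mul a b) = max (dep a) (dep b)" | "dep (Aff f t) = Suc (dep t)"

lemma dep_factors: "x \<in> set (factors t) \<Longrightarrow> dep x \<le> dep t"
  by (induction t rule: factors.induct) auto
lemma dep_size: "dep x < size x"
  by (induction x) auto

lemma ge_l_fuel_stab:
  "dep a < k \<Longrightarrow> dep b < k \<Longrightarrow> dep a < k' \<Longrightarrow> dep b < k' \<Longrightarrow> ge_l_fuel ges k a b = ge_l_fuel ges k' a b"
proof (induction k arbitrary: k' a b)
  case 0 then show ?case by simp
next
  case (Suc n)
  obtain n' where k': "k' = Suc n'" using Suc.prems by (cases k') auto
  have IH': "ge_l_fuel ges n x y = ge_l_fuel ges n' x y" if "dep x < n" "dep y < n" "dep x < n'" "dep y < n'" for x y
    using Suc.IH that by blast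
  show ?case
  proof (cases "\<exists>f t g u. a = Aff f t \<and> b = Aff g u")
    case True
    then obtain f t g u where ab: "a = Aff f t" "b = Aff g u" by blast
    have dt: "\<forall>x\<in>set (factors t). dep x < n \<and> dep x < n'" using Suc.prems ab k' dep_factors by fastforce
    have du: "\<forall>x\<in>set (factors u). dep x < n \<and> dep x < n'" using Suc.prems ab k' dep_factors by fastforce
    have s1: "sort_by (ge_l_fuel ges n) (factors t) = sort_by (ge_l_fuel ges n') (factors t)"
      by (rule sort_cong) (use dt IH' in auto)
    have s2: "sort_by (ge_l_fuel ges n) (factors u) = sort_by (ge_l_fuel ges n') (factors u)"
      by (rule sort_cong) (use du IH' in auto)
    have l: "lex_ge (ge_l_fuel ges n) (sort_by (ge_l_fuel ges n') (factors t)) (sort_by (ge_l_fuel ges n') (factors u))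
      = lex_ge (ge_l_fuel ges n') (sort_by (ge_l_fuel ges n') (factors t)) (sort_by (ge_l_fuel ges n') (factors u))"
      by (rule lex_cong) (use dt du IH' in auto)
    show ?thesis using ab k' s1 s2 l by simp
  next
    case False
    then show ?thesis using k' by (cases a; cases b) auto
  qed
qed

lemma fuel_to_gl: "dep x < n \<Longrightarrow> dep y < n \<Longrightarrow> ge_l_fuel ges n x y = ge_l ges x y"
  unfolding ge_l_def using dep_size[of x] dep_size[of y]
  by (intro ge_l_fuel_stab) auto

fun hs :: "('c, 'v, 'f) trm \<Rightarrow> ('c, 'v, 'f) sym option" where
  "hs (Cst c) = Some (SConst c)" | "hs (Var v) = Some (SVar v)" | "hs (Aff f t) = Some (SAff f)"
| "hs (Add a b) = None" | "hs (Mul a b) = None"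

definition argge where
  "argge ges a b = (case (a, b) of (Aff f t, Aff g u) \<Rightarrow>
     lex_ge (ge_l ges) (sort_by (ge_l ges) (factors t)) (sort_by (ge_l ges) (factors u)) | _ \<Rightarrow> True)"

lemma ge_l_hs:
  assumes tor: "total_order_rel ges"
  shows "ge_l ges a b = (case (hs a, hs b) of (Some s, Some s') \<Rightarrow> (s \<noteq> s' \<and> ges s s') \<or> (s = s' \<and> argge ges a b) | _ \<Rightarrow> False)"
proof -
  define n where "n = max (dep a) (dep b)"
  have e: "ge_l ges a b = ge_l_fuel ges (Suc n) a b"
    unfolding n_def by (rule fuel_to_gl[symmetric]) auto
  show ?thesis
  proof (cases "\<exists>f t g u. a = Aff f t \<and> b = Aff g u")
    case True
    then obtain f t g u where ab: "a = Aff f t" "b = Aff g u" by blast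
    have dt: "\<forall>x\<in>set (factors t). dep x < n" using ab dep_factors unfolding n_def by fastforce
    have du: "\<forall>x\<in>set (factors u). dep x < n" using ab dep_factors unfolding n_def by fastforce
    have s1: "sort_by (ge_l_fuel ges n) (factors t) = sort_by (ge_l ges) (factors t)"
      by (rule sort_cong) (use dt in \<open>auto simp: fuel_to_gl\<close>)
    have s2: "sort_by (ge_l_fuel ges n) (factors u) = sort_by (ge_l ges) (factors u)"
      by (rule sort_cong) (use du in \<open>auto simp: fuel_to_gl\<close>)
    have l: "lex_ge (ge_l_fuel ges n) (sort_by (ge_l ges) (factors t)) (sort_by (ge_l ges) (factors u))
      = lex_ge (ge_l ges) (sort_by (ge_l ges) (factors t)) (sort_by (ge_l ges) (factors u))"
      by (rule lex_cong) (use dt du in \<open>auto simp: fuel_to_gl\<close>)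
    show ?thesis using ab s1 s2 l e by (auto simp: argge_def)
  next
    case False
    then show ?thesis using e tor_refl[OF tor] by (cases a; cases b) (auto simp: argge_def)
  qed
qed

lemma hs_SAff: "hs x = Some (SAff f) \<Longrightarrow> \<exists>t. x = Aff f t"
  by (cases x) auto
lemma hs_nonAff: "hs x = Some s \<Longrightarrow> (\<forall>f. s \<noteq> SAff f) \<Longrightarrow> argge ges x y = True"
  by (cases x) (auto simp: argge_def)
lemma hs_nonAff2: "hs y = Some s \<Longrightarrow> (\<forall>f. s \<noteq> SAff f) \<Longrightarrow> argge ges x y = True"
  by (cases y; cases x) (auto simp: argge_def)

lemma ge_l_some:
  assumes tor: "total_order_rel ges" and "hs x = Some s" "hs y = Some s'"
  shows "ge_l ges x y = ((s \<noteq> s' \<and> ges s s') \<or> (s = s' \<and> argge ges x y))"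
  using ge_l_hs[OF tor, of x y] assms by simp

lemma tpo_step:
  assumes tor: "total_order_rel ges" and tB: "tpo B (ge_l ges)"
    and Aargs: "\<And>f t. Aff f t \<in> A \<Longrightarrow> set (factors t) \<subseteq> B"
    and Ahs: "\<And>x. x \<in> A \<Longrightarrow> hs x \<noteq> None"
  shows "tpo A (ge_l ges)"
proof -
  have tl: "tpo {xs. set xs \<subseteq> B} (lex_ge (ge_l ges))" using tpo_lex[OF tB] .
  define AL where "AL t = sort_by (ge_l ges) (factors t)" for t
  have ALB: "Aff f t \<in> A \<Longrightarrow> AL t \<in> {xs. set xs \<subseteq> B}" for f t using Aargs unfolding AL_def by auto
  have aff_arg: "argge ges (Aff f t) (Aff g u) = lex_ge (ge_l ges) (AL t) (AL u)" for f t g u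
    unfolding argge_def AL_def by simp
  have arefl: "argge ges x x" if "x \<in> A" for x
  proof (cases x)
    case (Aff f t) then show ?thesis using aff_arg tpo_refl[OF tl ALB] that by simp
  qed (auto simp: argge_def)
  have atot: "argge ges x y \<or> argge ges y x" if "x \<in> A" "y \<in> A" "hs x = hs y" for x y
  proof (cases x)
    case (Aff f t)
    have hy: "hs y = Some (SAff f)" using that Aff by simp
    obtain u where u: "y = Aff f u" using hs_SAff[OF hy] by (elim exE)
    have "AL t \<in> {xs. set xs \<subseteq> B}" "AL u \<in> {xs. set xs \<subseteq> B}"
      using ALB[of f t] ALB[of f u] that(1,2) Aff u by simp_all
    then have "lex_ge (ge_l ges) (AL t) (AL u) \<or> lex_ge (ge_l ges) (AL u) (AL t)" by (rule tpo_total[OF tl])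
    then show ?thesis using Aff u aff_arg by simp
  qed (use that in \<open>cases y; auto simp: argge_def\<close>)+
  have atrans: "argge ges x z" if "x \<in> A" "y \<in> A" "z \<in> A" "hs x = hs y" "hs y = hs z" "argge ges x y" "argge ges y z" for x y z
  proof (cases x)
    case (Aff f t)
    have hy: "hs y = Some (SAff f)" using that Aff by simp
    obtain u where u: "y = Aff f u" using hs_SAff[OF hy] by (elim exE)
    have hz: "hs z = Some (SAff f)" using that Aff by simp
    obtain w where w: "z = Aff f w" using hs_SAff[OF hz] by (elim exE)
    have m: "AL t \<in> {xs. set xs \<subseteq> B}" "AL u \<in> {xs. set xs \<subseteq> B}" "AL w \<in> {xs. set xs \<subseteq> B}"
      using ALB[of f t] ALB[of f u] ALB[of f w] that(1,2,3) Aff u w by simp_all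
    have "lex_ge (ge_l ges) (AL t) (AL u)" "lex_ge (ge_l ges) (AL u) (AL w)" using that Aff u w aff_arg by simp_all
    then have "lex_ge (ge_l ges) (AL t) (AL w)" using tpo_trans[OF tl m] by blast
    then show ?thesis using Aff w aff_arg by simp
  qed (use that in \<open>cases z; auto simp: argge_def\<close>)+
  show ?thesis unfolding tpo_def
  proof (intro conjI ballI impI)
    fix x assume x: "x \<in> A"
    obtain s where "hs x = Some s" using Ahs[OF x] by (cases "hs x") auto
    then show "ge_l ges x x" using ge_l_some[OF tor] arefl[OF x] by simp
  next
    fix x y assume x: "x \<in> A" and y: "y \<in> A"
    obtain s where s1: "hs x = Some s" using Ahs[OF x] by (cases "hs x") auto
    obtain s' where s2: "hs y = Some s'" using Ahs[OF y] by (cases "hs y") auto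
    note s = s1 s2
    show "ge_l ges x y \<or> ge_l ges y x"
      using ge_l_some[OF tor s] ge_l_some[OF tor s(2) s(1)] atot[OF x y] tor_total[OF tor, of s s'] s by auto
  next
    fix x y z assume x: "x \<in> A" and y: "y \<in> A" and z: "z \<in> A" and xy: "ge_l ges x y" and yz: "ge_l ges y z"
    obtain s where s1: "hs x = Some s" using Ahs[OF x] by (cases "hs x") auto
    obtain s' where s2: "hs y = Some s'" using Ahs[OF y] by (cases "hs y") auto
    obtain s'' where s3: "hs z = Some s''" using Ahs[OF z] by (cases "hs z") auto
    note s = s1 s2 s3
    have 1: "(s \<noteq> s' \<and> ges s s') \<or> (s = s' \<and> argge ges x y)" using xy ge_l_some[OF tor s(1,2)] by simp
    have 2: "(s' \<noteq> s'' \<and> ges s' s'') \<or> (s' = s'' \<and> argge ges y z)" using yz ge_l_some[OF tor s(2,3)] by simp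
    have "(s \<noteq> s'' \<and> ges s s'') \<or> (s = s'' \<and> argge ges x z)"
    proof -
      { assume a: "s \<noteq> s'" "ges s s'" "s' \<noteq> s''" "ges s' s''"
        then have "ges s s''" using tor_trans[OF tor] by blast
        moreover have "s \<noteq> s''" using a tor_antisym[OF tor] by blast
        ultimately have ?thesis by blast }
      moreover
      { assume a: "s \<noteq> s'" "ges s s'" "s' = s''"
        then have ?thesis by blast }
      moreover
      { assume a: "s = s'" "s' \<noteq> s''" "ges s' s''"
        then have ?thesis by blast }
      moreover
      { assume a: "s = s'" "argge ges x y" "s' = s''" "argge ges y z"
        then have "argge ges x z" using atrans[OF x y z] s by simp
        then have ?thesis using a by blast }
      ultimately show ?thesis using 1 2 by blast
    qed
    then show "ge_l ges x z" using ge_l_some[OF tor s(1,3)] by simp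
  qed
qed

definition FD :: "nat \<Rightarrow> ('c, 'v, 'f) trm set" where
  "FD n = {x. is_factor x \<and> dep x \<le> n}"

lemma plus_free_factors: "plus_free t \<Longrightarrow> x \<in> set (factors t) \<Longrightarrow> is_factor x"
  by (induction t rule: factors.induct) auto

lemma is_factor_hs: "is_factor x \<Longrightarrow> hs x \<noteq> None"
  by (cases x) auto

lemma tpo_FD: assumes tor: "total_order_rel ges" shows "tpo (FD n) (ge_l ges)"
proof (induction n)
  case 0
  show ?case
    by (rule tpo_step[OF tor, of "{}"]) (auto simp: FD_def tpo_def dest: is_factor_hs)
next
  case (Suc n)
  show ?case
  proof (rule tpo_step[OF tor Suc.IH])
    fix f t assume "Aff f t \<in> FD (Suc n)"
    then show "set (factors t) \<subseteq> FD n"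
      using plus_free_factors dep_factors unfolding FD_def by fastforce
  qed (auto simp: FD_def dest: is_factor_hs)
qed

lemma tpo_FA: fixes ges :: "('c, 'v, 'f) sym \<Rightarrow> ('c, 'v, 'f) sym \<Rightarrow> bool"
  assumes "total_order_rel ges" shows "tpo {x. is_factor x} (ge_l ges)"
  unfolding tpo_def
proof (intro conjI ballI impI)
  fix x :: "('c, 'v, 'f) trm" assume "x \<in> {x. is_factor x}"
  then have "x \<in> FD (dep x)" by (auto simp: mem_Collect_eq FD_def)
  then show "ge_l ges x x" using tpo_refl[OF tpo_FD[OF assms]] by blast
next
  fix x y :: "('c, 'v, 'f) trm" assume "x \<in> {x. is_factor x}" "y \<in> {x. is_factor x}"
  then have "x \<in> FD (max (dep x) (dep y))" "y \<in> FD (max (dep x) (dep y))" by (auto simp: mem_Collect_eq FD_def)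
  then show "ge_l ges x y \<or> ge_l ges y x" using tpo_total[OF tpo_FD[OF assms]] by blast
next
  fix x y z :: "('c, 'v, 'f) trm" assume "x \<in> {x. is_factor x}" "y \<in> {x. is_factor x}" "z \<in> {x. is_factor x}" "ge_l ges x y" "ge_l ges y z"
  moreover have "x \<in> FD (max (dep x) (max (dep y) (dep z)))" "y \<in> FD (max (dep x) (max (dep y) (dep z)))"
     "z \<in> FD (max (dep x) (max (dep y) (dep z)))" using calculation by (auto simp: mem_Collect_eq FD_def)
  ultimately show "ge_l ges x z" using tpo_trans[OF tpo_FD[OF assms]] by blast
qed



section \<open>Invariance of the orders under associativity\<close>

lemma hs_app_add[simp]: "hs (app_add a b) = None"
  by (induction a b rule: app_add.induct) auto
lemma hs_app_mul[simp]: "hs (app_mul a b) = None"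
  by (induction a b rule: app_mul.induct) auto
lemma hs_nrm[simp]: "hs (nrm x) = hs x"
  by (cases x) auto

lemma argge_nonAff: "\<not> (\<exists>f t g u. x = Aff f t \<and> y = Aff g u) \<Longrightarrow> argge ges x y"
  by (cases x; cases y) (auto simp: argge_def)

lemma app_add_ne_Aff[simp]: "app_add x y \<noteq> Aff f t"
  by (induction x y rule: app_add.induct) auto
lemma app_mul_ne_Aff[simp]: "app_mul x y \<noteq> Aff f t"
  by (induction x y rule: app_mul.induct) auto

lemma isAff_nrm: "(\<exists>f t. nrm x = Aff f t) \<longleftrightarrow> (\<exists>f t. x = Aff f t)"
  by (cases x) auto

lemma ge_l_nrm_aux:
  assumes tor: "total_order_rel ges"
  shows "\<forall>x y. dep x \<le> n \<longrightarrow> dep y \<le> n \<longrightarrow> ge_l ges (nrm x) (nrm y) = ge_l ges x y"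
proof (induction n)
  case 0
  show ?case
  proof (intro allI impI)
    fix x y :: "('a, 'b, 'c) trm" assume "dep x \<le> 0" "dep y \<le> 0"
    then have "\<not> (\<exists>f t. x = Aff f t)" by auto
    then have e: "argge ges (nrm x) (nrm y) = argge ges x y"
      using argge_nonAff isAff_nrm by metis
    show "ge_l ges (nrm x) (nrm y) = ge_l ges x y" by (simp only: ge_l_hs[OF tor] hs_nrm e)
  qed
next
  case (Suc n)
  show ?case
  proof (intro allI impI)
    fix x y :: "('a, 'b, 'c) trm" assume dx: "dep x \<le> Suc n" and dy: "dep y \<le> Suc n"
    have e: "argge ges (nrm x) (nrm y) = argge ges x y"
    proof (cases "\<exists>f t g u. x = Aff f t \<and> y = Aff g u")
      case True
      then obtain f t g u where xy: "x = Aff f t" "y = Aff g u" by blast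
      have dt: "\<forall>z\<in>set (factors t) \<union> set (factors u). dep z \<le> n"
        using dx dy xy dep_factors by fastforce
      have r: "\<forall>a\<in>set (factors t) \<union> set (factors u). \<forall>b\<in>set (factors t) \<union> set (factors u).
          ge_l ges (nrm a) (nrm b) = ge_l ges a b" using Suc.IH dt by blast
      have st: "sort_by (ge_l ges) (factors (nrm t)) = map nrm (sort_by (ge_l ges) (factors t))"
        unfolding factors_nrm by (rule sort_map) (use r in blast)
      have su: "sort_by (ge_l ges) (factors (nrm u)) = map nrm (sort_by (ge_l ges) (factors u))"
        unfolding factors_nrm by (rule sort_map) (use r in blast)
      have l: "lex_ge (ge_l ges) (map nrm (sort_by (ge_l ges) (factors t))) (map nrm (sort_by (ge_l ges) (factors u)))
         = lex_ge (ge_l ges) (sort_by (ge_l ges) (factors t)) (sort_by (ge_l ges) (factors u))"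
        by (rule lex_map) (use r in auto)
      show ?thesis using xy st su l by (simp add: argge_def)
    next
      case False
      then have "\<not> (\<exists>f t g u. nrm x = Aff f t \<and> nrm y = Aff g u)" using isAff_nrm by metis
      then show ?thesis using False argge_nonAff by metis
    qed
    show "ge_l ges (nrm x) (nrm y) = ge_l ges x y" by (simp only: ge_l_hs[OF tor] hs_nrm e)
  qed
qed

lemma ge_l_nrm: "total_order_rel ges \<Longrightarrow> ge_l ges (nrm x) (nrm y) = ge_l ges x y"
  using ge_l_nrm_aux[of ges "max (dep x) (dep y)"] by auto

lemma ge_p_nrm: "total_order_rel ges \<Longrightarrow> ge_p ges (nrm x) (nrm y) = ge_p ges x y"
proof -
  assume tor: "total_order_rel ges"
  have r: "\<forall>a b. ge_l ges (nrm a) (nrm b) = ge_l ges a b" using ge_l_nrm[OF tor] by blast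
  have "sort_by (ge_l ges) (factors (nrm x)) = map nrm (sort_by (ge_l ges) (factors x))"
    unfolding factors_nrm by (rule sort_map) (use r in blast)
  moreover have "sort_by (ge_l ges) (factors (nrm y)) = map nrm (sort_by (ge_l ges) (factors y))"
    unfolding factors_nrm by (rule sort_map) (use r in blast)
  moreover have "lex_ge (ge_l ges) (map nrm (sort_by (ge_l ges) (factors x))) (map nrm (sort_by (ge_l ges) (factors y)))
         = lex_ge (ge_l ges) (sort_by (ge_l ges) (factors x)) (sort_by (ge_l ges) (factors y))"
    by (rule lex_map) (use r in auto)
  ultimately show ?thesis by (simp add: ge_p_def)
qed

lemma sorted_l_nrm: "total_order_rel ges \<Longrightarrow> sorted_wrt (ge_l ges) (map nrm L) \<longleftrightarrow> sorted_wrt (ge_l ges) L"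
  by (simp add: sorted_wrt_map ge_l_nrm)
lemma sorted_p_nrm: "total_order_rel ges \<Longrightarrow> sorted_wrt (ge_p ges) (map nrm L) \<longleftrightarrow> sorted_wrt (ge_p ges) L"
  by (simp add: sorted_wrt_map ge_p_nrm)

lemma cst_factors_nrm: "Cst c \<in> set (factors a) \<longleftrightarrow> Cst c \<in> set (factors (nrm a))"
  unfolding factors_nrm set_map image_iff by (metis nrm.simps(1) nrm_eq_Cst)
lemma cst_summands_nrm: "Cst c \<in> set (summands a) \<longleftrightarrow> Cst c \<in> set (summands (nrm a))"
  unfolding summands_nrm set_map image_iff by (metis nrm.simps(1) nrm_eq_Cst)

fun fac_ok :: "('c::{zero,one}, 'v, 'f) trm \<Rightarrow> bool" where
  "fac_ok (Cst c) = True" | "fac_ok (Var v) = True" | "fac_ok (Add a b) = False"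
| "fac_ok (Mul a b) = (fac_ok a \<and> fac_ok b \<and> Cst 0 \<notin> set (factors a @ factors b) \<and> Cst 1 \<notin> set (factors a @ factors b))"
| "fac_ok (Aff f t) = (fac_ok t \<and> t \<noteq> Cst 0)"

fun sum_ok :: "('c::{zero,one}, 'v, 'f) trm \<Rightarrow> bool" where
  "sum_ok (Add a b) = (sum_ok a \<and> sum_ok b)"
| "sum_ok t = fac_ok t"

lemma aeq_ok: "aeq s t \<Longrightarrow> (fac_ok s \<longleftrightarrow> fac_ok t) \<and> (sum_ok s \<longleftrightarrow> sum_ok t)"
proof (induction rule: aeq.induct)
  case (aeq_mul a a' b b')
  have "Cst c \<in> set (factors a) \<longleftrightarrow> Cst c \<in> set (factors a')" for c
    using aeq_mul.hyps(1) aeq_nrm cst_factors_nrm by metis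
  moreover have "Cst c \<in> set (factors b) \<longleftrightarrow> Cst c \<in> set (factors b')" for c
    using aeq_mul.hyps(2) aeq_nrm cst_factors_nrm by metis
  ultimately show ?case using aeq_mul.IH by simp
next
  case (aeq_aff a a' f)
  have "a = Cst 0 \<longleftrightarrow> a' = Cst 0" using aeq_aff.hyps aeq_nrm nrm_eq_Cst by metis
  then show ?case using aeq_aff.IH by simp
qed auto

definition Zp :: "('c::zero, 'v, 'f) trm \<Rightarrow> bool" where
  "Zp s \<longleftrightarrow> (Cst 0 \<in> set (summands s) \<longrightarrow> s = Cst 0)"

lemma aeq_Zp: "aeq s t \<Longrightarrow> Zp s \<Longrightarrow> Zp t"
proof -
  assume a: "aeq s t" and z: "Zp s"
  have n: "nrm s = nrm t" using aeq_nrm[OF a] .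
  show "Zp t" unfolding Zp_def
  proof
    assume "Cst 0 \<in> set (summands t)"
    then have "Cst 0 \<in> set (summands (nrm s))" using cst_summands_nrm[of 0 t] n by simp
    then have "Cst 0 \<in> set (summands s)" using cst_summands_nrm[of 0 s] by simp
    then have "s = Cst 0" using z unfolding Zp_def by blast
    then have "nrm t = Cst 0" using n by simp
    then show "t = Cst 0" by simp
  qed
qed

fun srtd :: "(('c, 'v, 'f) sym \<Rightarrow> ('c, 'v, 'f) sym \<Rightarrow> bool) \<Rightarrow> ('c, 'v, 'f) trm \<Rightarrow> bool" where
  "srtd ges (Cst c) = True" | "srtd ges (Var v) = True"
| "srtd ges (Add a b) = (srtd ges a \<and> srtd ges b)"
| "srtd ges (Mul a b) = (srtd ges a \<and> srtd ges b \<and> sorted_wrt (ge_l ges) (factors a @ factors b))"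
| "srtd ges (Aff f t) = srtd ges t"

lemma aeq_srtd: assumes tor: "total_order_rel ges" shows "aeq s t \<Longrightarrow> srtd ges s \<longleftrightarrow> srtd ges t"
proof (induction rule: aeq.induct)
  case (aeq_assoc_mul a b c)
  then show ?case by (auto simp: sorted_wrt_append)
next
  case (aeq_mul a a' b b')
  have "sorted_wrt (ge_l ges) (factors a @ factors b) \<longleftrightarrow> sorted_wrt (ge_l ges) (factors (nrm a) @ factors (nrm b))"
    using sorted_l_nrm[OF tor, of "factors a @ factors b"] by (simp add: factors_nrm)
  moreover have "sorted_wrt (ge_l ges) (factors a' @ factors b') \<longleftrightarrow> sorted_wrt (ge_l ges) (factors (nrm a') @ factors (nrm b'))"
    using sorted_l_nrm[OF tor, of "factors a' @ factors b'"] by (simp add: factors_nrm)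
  ultimately show ?case using aeq_mul aeq_nrm[OF aeq_mul.hyps(1)] aeq_nrm[OF aeq_mul.hyps(2)] by simp
qed auto

definition nz :: "('c::zero, 'v, 'f) trm \<Rightarrow> bool" where "nz x \<longleftrightarrow> x \<noteq> Cst 0"

lemma nz_nrm[simp]: "nz (nrm x) = nz x" by (simp add: nz_def)

fun srtS :: "(('c::zero, 'v, 'f) sym \<Rightarrow> ('c, 'v, 'f) sym \<Rightarrow> bool) \<Rightarrow> ('c, 'v, 'f) trm \<Rightarrow> bool" where
  "srtS ges (Cst c) = True" | "srtS ges (Var v) = True"
| "srtS ges (Add a b) = (srtS ges a \<and> srtS ges b \<and> sorted_wrt (ge_p ges) (filter nz (summands a @ summands b)))"
| "srtS ges (Mul a b) = (srtS ges a \<and> srtS ges b)"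
| "srtS ges (Aff f t) = srtS ges t"

lemma filter_nz_map: "filter nz (map nrm L) = map nrm (filter nz L)"
  by (induction L) auto

lemma aeq_srtS: assumes tor: "total_order_rel ges" shows "aeq s t \<Longrightarrow> srtS ges s \<longleftrightarrow> srtS ges t"
proof (induction rule: aeq.induct)
  case (aeq_assoc_add a b c)
  then show ?case by (auto simp: sorted_wrt_append)
next
  case (aeq_add a a' b b')
  have "sorted_wrt (ge_p ges) (filter nz (summands a @ summands b)) \<longleftrightarrow>
        sorted_wrt (ge_p ges) (filter nz (summands (nrm a) @ summands (nrm b)))"
    using sorted_p_nrm[OF tor, of "filter nz (summands a @ summands b)"]
    by (simp add: summands_nrm filter_nz_map[symmetric])
  moreover have "sorted_wrt (ge_p ges) (filter nz (summands a' @ summands b')) \<longleftrightarrow>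
        sorted_wrt (ge_p ges) (filter nz (summands (nrm a') @ summands (nrm b')))"
    using sorted_p_nrm[OF tor, of "filter nz (summands a' @ summands b')"]
    by (simp add: summands_nrm filter_nz_map[symmetric])
  ultimately show ?case using aeq_add aeq_nrm[OF aeq_add.hyps(1)] aeq_nrm[OF aeq_add.hyps(2)] by simp
qed auto

definition NBR :: "('c, 'v, 'f) trm \<Rightarrow> bool" where
  "NBR s \<longleftrightarrow> \<not> (\<exists>A L B. L \<noteq> [] \<and> map nrm (summands s) = A @ L @ L @ B)"

lemma aeq_NBR: "aeq s t \<Longrightarrow> NBR s \<Longrightarrow> NBR t"
  unfolding NBR_def using aeq_nrm summands_nrm by metis



section \<open>Phase 1 and 4: termination and shape\<close>

fun meas :: "('c, 'v, 'f) trm \<Rightarrow> nat" where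
  "meas (Cst c) = 2" | "meas (Var v) = 2" | "meas (Add a b) = meas a + meas b + 1"
| "meas (Mul a b) = meas a * meas b" | "meas (Aff f t) = 2 ^ meas t"

lemma meas_ge: "meas s \<ge> 2"
proof (induction s)
  case (Mul a b)
  then have "meas a * meas b \<ge> 2 * 2" using mult_le_mono by blast
  then show ?case by simp
next
  case (Aff f t)
  have "(2::nat) ^ 2 \<le> 2 ^ meas t" using Aff by (intro power_increasing) auto
  then show ?case by simp
qed auto

lemma aeq_meas: "aeq s t \<Longrightarrow> meas s = meas t"
  by (induction rule: aeq.induct) (auto simp: algebra_simps)

lemma r12_meas:
  fixes a b :: nat assumes "a \<ge> 2" "b \<ge> 2"
  shows "(2::nat) ^ a + 2 ^ b + 1 + 2 + 1 < 2 ^ (a + b + 1)"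
proof -
  define x :: nat where "x = 2 ^ a"
  define y :: nat where "y = 2 ^ b"
  have x4: "x \<ge> 4" unfolding x_def using assms(1) power_increasing[of 2 a "2::nat"] by simp
  have y4: "y \<ge> 4" unfolding y_def using assms(2) power_increasing[of 2 b "2::nat"] by simp
  have e: "(2::nat) ^ (a + b + 1) = 2 * (x * y)" unfolding x_def y_def by (simp add: power_add)
  have "x * y \<ge> 4 * y" using x4 by simp
  moreover have "x * y \<ge> x * 4" using y4 by simp
  ultimately have "2 * (x * y) \<ge> 4 * x + 4 * y" by linarith
  then show ?thesis using e x4 y4 unfolding x_def[symmetric] y_def[symmetric] by linarith
qed

lemma rule_meas:
  assumes "rule ges lam i s t" "i \<in> {3..13}"
  shows "meas t < meas s"
proof -
  have "i = 3 \<or> i = 4 \<or> i = 5 \<or> i = 6 \<or> i = 7 \<or> i = 8 \<or> i = 9 \<or> i = 10 \<or> i = 11 \<or> i = 12 \<or> i = 13"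
    using assms(2) by (simp add: atLeastAtMost_iff) presburger
  then show ?thesis
  proof (elim disjE)
    assume "i = 3" then obtain u where "s = Add u u" "t = Cst 0" using assms(1) by (auto simp: rule_def)
    then show ?thesis using meas_ge[of u] by simp
  next
    assume "i = 4" then obtain u where "s = Mul u (Cst 0)" "t = Cst 0" using assms(1) by (auto simp: rule_def)
    then show ?thesis using meas_ge[of u] by simp
  next
    assume "i = 5" then obtain u where "s = Mul (Cst 0) u" "t = Cst 0" using assms(1) by (auto simp: rule_def)
    then show ?thesis using meas_ge[of u] by simp
  next
    assume "i = 6" then show ?thesis using assms(1) by (auto simp: rule_def)
  next
    assume "i = 7" then show ?thesis using assms(1) by (auto simp: rule_def)
  next
    assume "i = 8" then have "s = Mul t (Cst 1)" using assms(1) by (auto simp: rule_def)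
    then show ?thesis using meas_ge[of t] by simp
  next
    assume "i = 9" then have "s = Mul (Cst 1) t" using assms(1) by (auto simp: rule_def)
    then show ?thesis using meas_ge[of t] by simp
  next
    assume "i = 10" then obtain u1 u2 u where "s = Mul (Add u1 u2) u" "t = Add (Mul u1 u) (Mul u2 u)"
      using assms(1) by (auto simp: rule_def)
    then show ?thesis using meas_ge[of u] by (simp add: algebra_simps)
  next
    assume "i = 11" then obtain u1 u2 u where "s = Mul u (Add u1 u2)" "t = Add (Mul u u1) (Mul u u2)"
      using assms(1) by (auto simp: rule_def)
    then show ?thesis using meas_ge[of u] by (simp add: algebra_simps)
  next
    assume "i = 12" then obtain f u1 u2 where "s = Aff f (Add u1 u2)" "t = Add (Add (Aff f u1) (Aff f u2)) (Cst (lam f))"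
      using assms(1) by (auto simp: rule_def)
    then show ?thesis using r12_meas[OF meas_ge[of u1] meas_ge[of u2]] by simp
  next
    assume "i = 13" then obtain f where "s = Aff f (Cst 0)" "t = Cst (lam f)"
      using assms(1) by (auto simp: rule_def)
    then show ?thesis by simp
  qed
qed

lemma ctx_meas: "ctx_step R s t \<Longrightarrow> (\<And>a b. R a b \<Longrightarrow> meas b < meas a) \<Longrightarrow> meas t < meas s"
proof (induction rule: ctx_step.induct)
  case (mul_l s t u)
  then show ?case using meas_ge[of u] by simp
next
  case (mul_r s t u)
  then show ?case using meas_ge[of u] by simp
next
  case (aff s t f)
  then show ?case by (simp add: power_strict_increasing)
qed auto

lemma rstep_meas: "rstep (rules ges lam I) s t \<Longrightarrow> I \<subseteq> {3..13} \<Longrightarrow> meas t < meas s"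
  unfolding rstep_def
proof (elim exE conjE)
  fix s' t' assume "aeq s s'" "ctx_step (rules ges lam I) s' t'" "aeq t' t" "I \<subseteq> {3..13}"
  have "meas t' < meas s'"
    by (rule ctx_meas[OF \<open>ctx_step (rules ges lam I) s' t'\<close>]) (use \<open>I \<subseteq> {3..13}\<close> in \<open>auto simp: rules_def intro: rule_meas\<close>)
  then show "meas t < meas s" using aeq_meas[OF \<open>aeq s s'\<close>] aeq_meas[OF \<open>aeq t' t\<close>] by simp
qed

lemma nf_exists_rules: "I \<subseteq> {3..13} \<Longrightarrow> \<exists>t. (rstep (rules ges lam I))\<^sup>*\<^sup>* s t \<and> is_nf (rules ges lam I) t"
  by (rule nf_exists[of _ meas]) (rule rstep_meas)

lemma nf_rule: "is_nf (rules ges lam I) s \<Longrightarrow> i \<in> I \<Longrightarrow> \<not> rule ges lam i s t"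
  using nf_root[of "rules ges lam I" s t] unfolding rules_def by blast

lemma sum_ok_nonAdd: "\<not> isAdd s \<Longrightarrow> sum_ok s = fac_ok s"
  by (cases s) auto

lemma fac_ok_cst: "fac_ok a \<Longrightarrow> Cst c \<in> set (factors a) \<Longrightarrow> c = 0 \<or> c = 1 \<Longrightarrow> a = Cst c"
  by (cases a) auto

lemma nf1_shape:
  fixes s :: "('c::field, 'v, 'f) trm"
  shows "is_nf (rules ges lam {3..13}) s \<Longrightarrow> sum_ok s \<and> Zp s"
proof (induction s)
  case (Cst c) then show ?case by (auto simp: Zp_def)
next
  case (Var v) then show ?case by (auto simp: Zp_def)
next
  case (Add a b)
  have ia: "sum_ok a \<and> Zp a" and ib: "sum_ok b \<and> Zp b" using Add nf_add by blast+
  have "a \<noteq> Cst 0" using nf_rule[OF Add.prems, of 7 b] by (auto simp: rule_def)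
  moreover have "b \<noteq> Cst 0" using nf_rule[OF Add.prems, of 6 a] by (auto simp: rule_def)
  ultimately have "Cst 0 \<notin> set (summands a)" "Cst 0 \<notin> set (summands b)" using ia ib by (auto simp: Zp_def)
  then show ?case using ia ib by (auto simp: Zp_def)
next
  case (Mul a b)
  have ia: "sum_ok a" and ib: "sum_ok b" using Mul nf_mul by blast+
  have na: "\<not> isAdd a"
  proof
    assume "isAdd a" then obtain u1 u2 where "a = Add u1 u2" by (cases a) auto
    then show False using nf_rule[OF Mul.prems, of 10 "Add (Mul u1 b) (Mul u2 b)"] by (auto simp: rule_def)
  qed
  have nb: "\<not> isAdd b"
  proof
    assume "isAdd b" then obtain u1 u2 where "b = Add u1 u2" by (cases b) auto
    then show False using nf_rule[OF Mul.prems, of 11 "Add (Mul a u1) (Mul a u2)"] by (auto simp: rule_def)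
  qed
  have fa: "fac_ok a" and fb: "fac_ok b" using ia ib na nb sum_ok_nonAdd by auto
  have a0: "a \<noteq> Cst 0" using nf_rule[OF Mul.prems, of 5 "Cst 0"] by (auto simp: rule_def)
  have a1: "a \<noteq> Cst 1" using nf_rule[OF Mul.prems, of 9 b] by (auto simp: rule_def)
  have b0: "b \<noteq> Cst 0" using nf_rule[OF Mul.prems, of 4 "Cst 0"] by (auto simp: rule_def)
  have b1: "b \<noteq> Cst 1" using nf_rule[OF Mul.prems, of 8 a] by (auto simp: rule_def)
  have "Cst 0 \<notin> set (factors a)" "Cst 1 \<notin> set (factors a)" "Cst 0 \<notin> set (factors b)" "Cst 1 \<notin> set (factors b)"
    using fac_ok_cst[OF fa, of 0] fac_ok_cst[OF fa, of 1] fac_ok_cst[OF fb, of 0] fac_ok_cst[OF fb, of 1] a0 a1 b0 b1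
    by auto
  then show ?case using fa fb by (auto simp: Zp_def)
next
  case (Aff f t)
  have it: "sum_ok t" using Aff.IH nf_aff[OF Aff.prems] by blast
  have nt: "\<not> isAdd t"
  proof
    assume "isAdd t" then obtain u1 u2 where "t = Add u1 u2" by (cases t) auto
    then show False using nf_rule[OF Aff.prems, of 12 "Add (Add (Aff f u1) (Aff f u2)) (Cst (lam f))"]
      by (auto simp: rule_def)
  qed
  have "t \<noteq> Cst 0" using nf_rule[OF Aff.prems, of 13 "Cst (lam f)"] by (auto simp: rule_def)
  then show ?case using it nt sum_ok_nonAdd by (auto simp: Zp_def)
qed



lemma fac_ok_plus_free: "fac_ok x \<Longrightarrow> plus_free x"
  by (induction x) auto
lemma fac_ok_is_factor: "fac_ok x \<Longrightarrow> \<not> isMul x \<Longrightarrow> is_factor x"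
  by (cases x) (auto dest: fac_ok_plus_free)
lemma fac_ok_factors: "fac_ok s \<Longrightarrow> x \<in> set (factors s) \<Longrightarrow> fac_ok x"
  by (induction s rule: factors.induct) auto
lemma fac_ok_factors_cst: "fac_ok s \<Longrightarrow> isMul s \<Longrightarrow> Cst 0 \<notin> set (factors s) \<and> Cst 1 \<notin> set (factors s)"
  by (cases s) auto
lemma fac_ok_sum_ok: "fac_ok s \<Longrightarrow> sum_ok s"
  by (cases s) auto
lemma fac_ok_factor_is_factor: "fac_ok s \<Longrightarrow> x \<in> set (factors s) \<Longrightarrow> is_factor x"
  using fac_ok_factors fac_ok_is_factor factors_elem by blast

lemma factors_mk_prod_id: "L \<noteq> [] \<Longrightarrow> (\<forall>x\<in>set L. \<not> isMul x) \<Longrightarrow> factors (mk_prod L) = L"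
  by (simp add: factors_mk_prod concat_factors_id)

lemma mk_prod_isMul: "length L \<ge> 2 \<Longrightarrow> isMul (mk_prod L)"
  by (induction L rule: mk_prod.induct) auto

lemma fac_ok_mk_prod: "L \<noteq> [] \<Longrightarrow> (\<forall>x\<in>set L. fac_ok x \<and> \<not> isMul x \<and> x \<noteq> Cst 0 \<and> x \<noteq> Cst 1) \<Longrightarrow> fac_ok (mk_prod L)"
proof (induction L rule: mk_prod.induct)
  case (3 t v va)
  have "factors (mk_prod (v # va)) = v # va" by (rule factors_mk_prod_id) (use 3 in auto)
  then show ?case using 3 by (auto simp: factors_nonMul)
qed auto

lemma srtd_factors: "srtd ges s \<Longrightarrow> x \<in> set (factors s) \<Longrightarrow> srtd ges x"
  by (induction s rule: factors.induct) auto
lemma srtd_sorted: "srtd ges s \<Longrightarrow> sorted_wrt (ge_l ges) (factors s)"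
  by (cases s) auto

lemma srtd_mk_prod: "L \<noteq> [] \<Longrightarrow> (\<forall>x\<in>set L. srtd ges x \<and> \<not> isMul x) \<Longrightarrow> sorted_wrt (ge_l ges) L \<Longrightarrow> srtd ges (mk_prod L)"
proof (induction L rule: mk_prod.induct)
  case (3 t v va)
  have "factors (mk_prod (v # va)) = v # va" by (rule factors_mk_prod_id) (use 3 in auto)
  then show ?case using 3 by (auto simp: factors_nonMul)
qed auto

lemma rule2_shape:
  assumes "rule ges lam 2 s t"
  shows "isMul s \<and> t = mk_prod (sort_by (ge_l ges) (factors s)) \<and> (\<forall>a\<in>set (factors s). is_factor a)
     \<and> sort_by (ge_l ges) (factors s) \<noteq> factors s \<and> length (factors s) \<ge> 2"
proof -
  have r: "(\<forall>a\<in>set (factors s). is_factor a) \<and> sort_by (ge_l ges) (factors s) \<noteq> factors s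
            \<and> t = mk_prod (sort_by (ge_l ges) (factors s))"
    using assms by (simp add: rule_def)
  have m: "isMul s"
  proof (rule ccontr)
    assume "\<not> isMul s" then have "factors s = [s]" by (rule factors_nonMul)
    then show False using r by (simp add: sort_by_def)
  qed
  have "length (factors s) \<ge> 2"
  proof (rule ccontr)
    assume "\<not> length (factors s) \<ge> 2"
    moreover have "length (factors s) \<noteq> 0" using factors_ne[of s] by simp
    ultimately have "length (factors s) = 1" by linarith
    then obtain x where "factors s = [x]" by (auto simp: length_Suc_conv)
    then show False using r by (simp add: sort_by_def)
  qed
  then show ?thesis using r m by blast
qed

lemma ctx2:
  "ctx_step (rule2_inner ges lam) s t \<Longrightarrow> (fac_ok s \<longrightarrow> fac_ok t) \<and> (sum_ok s \<longrightarrow> sum_ok t)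
    \<and> (\<forall>c. Cst c \<in> set (factors t) \<longrightarrow> Cst c \<in> set (factors s))
    \<and> (\<forall>c. Cst c \<in> set (summands t) \<longrightarrow> Cst c \<in> set (summands s)) \<and> (\<forall>c. t \<noteq> Cst c)"
proof (induction rule: ctx_step.induct)
  case (root s t)
  then have sh: "isMul s \<and> t = mk_prod (sort_by (ge_l ges) (factors s)) \<and> length (factors s) \<ge> 2"
    using rule2_shape unfolding rule2_inner_def by blast
  have ne: "sort_by (ge_l ges) (factors s) \<noteq> []" using sh by (metis length_sort list.size(3) not_numeral_le_zero)
  have nm: "\<forall>x\<in>set (sort_by (ge_l ges) (factors s)). \<not> isMul x" using factors_elem by fastforce
  have ft: "factors t = sort_by (ge_l ges) (factors s)"
    using sh factors_mk_prod_id[OF ne nm] by simp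
  have tm: "isMul t" using sh mk_prod_isMul[of "sort_by (ge_l ges) (factors s)"] by simp
  then have st: "summands t = [t]" by (cases t) auto
  have "fac_ok t" if "fac_ok s"
  proof -
    have "\<forall>x\<in>set (sort_by (ge_l ges) (factors s)). fac_ok x \<and> \<not> isMul x \<and> x \<noteq> Cst 0 \<and> x \<noteq> Cst 1"
      using fac_ok_factors[OF that] factors_elem fac_ok_factors_cst[OF that] sh by auto
    then show ?thesis using sh fac_ok_mk_prod[OF ne] by simp
  qed
  moreover have "sum_ok t" if "sum_ok s"
    using that \<open>fac_ok s \<Longrightarrow> fac_ok t\<close> sh tm sum_ok_nonAdd[of s] sum_ok_nonAdd[of t]
    by (metis app_mul_isMul(2) isAdd.simps isMul.elims(2))
  ultimately show ?case using ft st tm by auto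
qed auto

lemma no_rule2_Cst: "\<not> rule ges lam 2 (Cst c) t"
  using rule2_shape by fastforce
lemma ctx2_Cst: assumes "ctx_step (rule2_inner ges lam) (Cst c) t" shows False
  using assms by (cases rule: ctx_step.cases) (auto simp: rule2_inner_def no_rule2_Cst)

lemma steps2_inv:
  assumes "(rstep (rule2_inner ges lam))\<^sup>*\<^sup>* s t" "sum_ok s \<and> Zp s"
  shows "sum_ok t \<and> Zp t"
proof -
  have h1: "sum_ok s' \<and> Zp s'" if "aeq s s'" "sum_ok s \<and> Zp s" for s s' :: "('a, 'b, 'c) trm"
    using that aeq_ok aeq_Zp by blast
  have h2: "sum_ok t \<and> Zp t" if c: "ctx_step (rule2_inner ges lam) s t" and p: "sum_ok s \<and> Zp s" for s t :: "('a, 'b, 'c) trm"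
  proof -
  have "Zp t" unfolding Zp_def
  proof
    assume "Cst 0 \<in> set (summands t)"
    then have "Cst 0 \<in> set (summands s)" using ctx2[OF c] by blast
    then have "s = Cst 0" using p by (simp add: Zp_def)
    then show "t = Cst 0" using ctx2_Cst c by blast
  qed
  then show "sum_ok t \<and> Zp t" using ctx2[OF c] p by blast
  qed
  show ?thesis by (rule inv_rstep[of "\<lambda>x. sum_ok x \<and> Zp x", OF h1 h2 assms(1) assms(2)])
qed

lemma srtd_nf2:
  assumes tor: "total_order_rel ges"
  shows "srtd ges s \<Longrightarrow> is_nf (rules ges lam {2}) s"
proof (rule nf_by_inv[where P = "srtd ges"])
  fix s s' :: "('a, 'b, 'c) trm" assume "aeq s s'" "srtd ges s" then show "srtd ges s'" using aeq_srtd[OF tor] by blast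
next
  fix s t :: "('a, 'b, 'c) trm" assume "srtd ges s" "rules ges lam {2} s t"
  then have "rule ges lam 2 s t" by (simp add: rules_def)
  then have "sort_by (ge_l ges) (factors s) \<noteq> factors s" using rule2_shape by blast
  then show False using sort_sorted srtd_sorted \<open>srtd ges s\<close> by metis
qed auto

lemma nf2_srtd:
  fixes s :: "('c::field, 'v, 'f) trm"
  assumes tor: "total_order_rel ges"
  shows "is_nf (rule2_inner ges lam) s \<Longrightarrow> sum_ok s \<Longrightarrow> srtd ges s"
proof (induction s)
  case (Add a b) then show ?case using nf_add by auto
next
  case (Aff f t)
  have "sum_ok t" using Aff.prems fac_ok_sum_ok by auto
  then show ?case using Aff.IH nf_aff[OF Aff.prems(1)] by simp
next
  case (Mul a b)
  have fm: "fac_ok (Mul a b)" using Mul.prems by simp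
  then have "fac_ok a" "fac_ok b" by auto
  then have ia: "srtd ges a" and ib: "srtd ges b" using Mul nf_mul fac_ok_sum_ok by blast+
  show ?case
  proof (rule ccontr)
    assume ns: "\<not> srtd ges (Mul a b)"
    define L where "L = factors (Mul a b)"
    have Lf: "set L \<subseteq> {x. is_factor x}" using fac_ok_factor_is_factor[OF fm] unfolding L_def by blast
    have "\<not> sorted_wrt (ge_l ges) L" using ns ia ib unfolding L_def by simp
    then have neq: "sort_by (ge_l ges) L \<noteq> L" using sort_id_iff[OF tpo_FA[OF tor] Lf] by blast
    have "\<forall>x\<in>set L. srtd ges x" using ia ib srtd_factors unfolding L_def by auto
    then have "\<forall>x\<in>set L. is_nf (rules ges lam {2}) x" using srtd_nf2[OF tor] by blast
    then have "rule2_inner ges lam (Mul a b) (mk_prod (sort_by (ge_l ges) L))"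
      using neq Lf unfolding rule2_inner_def rule_def L_def by auto
    then show False using nf_root[OF Mul.prems(1)] by blast
  qed
qed auto

fun srt :: "(('c::one, 'v, 'f) sym \<Rightarrow> ('c, 'v, 'f) sym \<Rightarrow> bool) \<Rightarrow> ('c, 'v, 'f) trm \<Rightarrow> ('c, 'v, 'f) trm" where
  "srt ges (Cst c) = Cst c" | "srt ges (Var v) = Var v"
| "srt ges (Add a b) = Add (srt ges a) (srt ges b)"
| "srt ges (Aff f t) = Aff f (srt ges t)"
| "srt ges (Mul a b) = (let m = Mul (srt ges a) (srt ges b) in
     if sort_by (ge_l ges) (factors m) = factors m then m else mk_prod (sort_by (ge_l ges) (factors m)))"

lemma srt_ok:
  fixes s :: "('c::field, 'v, 'f) trm"
  assumes tor: "total_order_rel ges"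
  shows "sum_ok s \<Longrightarrow> (rstep (rule2_inner ges lam))\<^sup>*\<^sup>* s (srt ges s) \<and> srtd ges (srt ges s)"
proof (induction s)
  case (Add a b) then show ?case using rsteps_add by auto
next
  case (Aff f t)
  have "sum_ok t" using Aff.prems fac_ok_sum_ok by auto
  then show ?case using Aff.IH by (simp add: rsteps_aff)
next
  case (Mul a b)
  have "fac_ok a" "fac_ok b" using Mul.prems by auto
  then have ia: "(rstep (rule2_inner ges lam))\<^sup>*\<^sup>* a (srt ges a) \<and> srtd ges (srt ges a)"
    and ib: "(rstep (rule2_inner ges lam))\<^sup>*\<^sup>* b (srt ges b) \<and> srtd ges (srt ges b)"
    using Mul.IH fac_ok_sum_ok by blast+
  define m where "m = Mul (srt ges a) (srt ges b)"
  have st1: "(rstep (rule2_inner ges lam))\<^sup>*\<^sup>* (Mul a b) m" unfolding m_def using ia ib rsteps_mul by blast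
  have "sum_ok m \<and> Zp m" using steps2_inv[OF st1] Mul.prems by (simp add: Zp_def)
  then have fm: "fac_ok m" unfolding m_def by simp
  define L where "L = factors m"
  have Lf: "set L \<subseteq> {x. is_factor x}" using fac_ok_factor_is_factor[OF fm] unfolding L_def by blast
  have Ls: "\<forall>x\<in>set L. srtd ges x" using ia ib srtd_factors unfolding L_def m_def by auto
  have LnM: "\<forall>x\<in>set L. \<not> isMul x" using factors_elem unfolding L_def by blast
  show ?case
  proof (cases "sort_by (ge_l ges) L = L")
    case True
    then have "srt ges (Mul a b) = m" unfolding m_def L_def by (simp add: Let_def)
    moreover have "sorted_wrt (ge_l ges) L" using True sort_id_iff[OF tpo_FA[OF tor] Lf] by blast
    ultimately show ?thesis using st1 ia ib unfolding m_def L_def by simp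
  next
    case False
    then have e: "srt ges (Mul a b) = mk_prod (sort_by (ge_l ges) L)" unfolding m_def L_def by (simp add: Let_def)
    have "\<forall>x\<in>set L. is_nf (rules ges lam {2}) x" using Ls srtd_nf2[OF tor] by blast
    then have "rule2_inner ges lam m (mk_prod (sort_by (ge_l ges) L))"
      using False Lf unfolding rule2_inner_def rule_def L_def by auto
    then have "(rstep (rule2_inner ges lam))\<^sup>*\<^sup>* (Mul a b) (mk_prod (sort_by (ge_l ges) L))"
      using st1 rstep_root by (metis rtranclp.rtrancl_into_rtrancl)
    moreover have "sort_by (ge_l ges) L \<noteq> []" unfolding L_def by (metis length_sort length_0_conv factors_ne)
    moreover have "srtd ges (mk_prod (sort_by (ge_l ges) L))"
      by (rule srtd_mk_prod) (use Ls LnM sorted_sort[OF tpo_FA[OF tor] Lf] calculation(2) in auto)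
    ultimately show ?thesis using e by simp
  qed
qed auto



lemma tpo_MA:
  fixes ges :: "('c, 'v, 'f) sym \<Rightarrow> ('c, 'v, 'f) sym \<Rightarrow> bool"
  assumes tor: "total_order_rel ges"
  shows "tpo {m. \<forall>x\<in>set (factors m). is_factor x} (ge_p ges)"
proof -
  let ?M = "{m :: ('c, 'v, 'f) trm. \<forall>x\<in>set (factors m). is_factor x}"
  have tl: "tpo {xs. set xs \<subseteq> {x. is_factor x}} (lex_ge (ge_l ges))" by (rule tpo_lex[OF tpo_FA[OF tor]])
  have S: "m \<in> ?M \<Longrightarrow> sort_by (ge_l ges) (factors m) \<in> {xs. set xs \<subseteq> {x. is_factor x}}" for m by auto
  show ?thesis unfolding tpo_def ge_p_def
  proof (intro conjI ballI impI)
    fix x assume "x \<in> ?M" then show "lex_ge (ge_l ges) (sort_by (ge_l ges) (factors x)) (sort_by (ge_l ges) (factors x))"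
      using tpo_refl[OF tl S] by blast
  next
    fix x y assume "x \<in> ?M" "y \<in> ?M" then show "lex_ge (ge_l ges) (sort_by (ge_l ges) (factors x)) (sort_by (ge_l ges) (factors y)) \<or>
     lex_ge (ge_l ges) (sort_by (ge_l ges) (factors y)) (sort_by (ge_l ges) (factors x))"
      using tpo_total[OF tl S S] by blast
  next
    fix x y z assume "x \<in> ?M" "y \<in> ?M" "z \<in> ?M"
      "lex_ge (ge_l ges) (sort_by (ge_l ges) (factors x)) (sort_by (ge_l ges) (factors y))"
      "lex_ge (ge_l ges) (sort_by (ge_l ges) (factors y)) (sort_by (ge_l ges) (factors z))"
    then show "lex_ge (ge_l ges) (sort_by (ge_l ges) (factors x)) (sort_by (ge_l ges) (factors z))"
      using tpo_trans[OF tl S S S] by blast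
  qed
qed

lemma summands_mk_sum_id: "L \<noteq> [] \<Longrightarrow> (\<forall>x\<in>set L. \<not> isAdd x) \<Longrightarrow> summands (mk_sum L) = L"
  by (simp add: summands_mk_sum concat_summands_id)

lemma mk_sum_isAdd: "length L \<ge> 2 \<Longrightarrow> isAdd (mk_sum L)"
  by (induction L rule: mk_sum.induct) auto

lemma sum_ok_mk_sum: "(\<forall>x\<in>set L. sum_ok x) \<Longrightarrow> sum_ok (mk_sum L)"
  by (induction L rule: mk_sum.induct) auto
lemma srtd_mk_sum: "(\<forall>x\<in>set L. srtd ges x) \<Longrightarrow> srtd ges (mk_sum L)"
  by (induction L rule: mk_sum.induct) auto

lemma sum_ok_summands: "sum_ok s \<Longrightarrow> x \<in> set (summands s) \<Longrightarrow> fac_ok x"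
  by (induction s rule: summands.induct) auto
lemma srtd_summands: "srtd ges s \<Longrightarrow> x \<in> set (summands s) \<Longrightarrow> srtd ges x"
  by (induction s rule: summands.induct) auto

lemma rule1_shape:
  assumes "rule ges lam 1 s t"
  shows "isAdd s \<and> t = mk_sum (sort_by (ge_p ges) (summands s)) \<and> (\<forall>m\<in>set (summands s). is_monomial m)
     \<and> sort_by (ge_p ges) (summands s) \<noteq> summands s \<and> length (summands s) \<ge> 2"
proof -
  have r: "(\<forall>m\<in>set (summands s). is_monomial m) \<and> sort_by (ge_p ges) (summands s) \<noteq> summands s
            \<and> t = mk_sum (sort_by (ge_p ges) (summands s))"
    using assms by (simp add: rule_def)
  have "length (summands s) \<ge> 2"
  proof (rule ccontr)
    assume "\<not> length (summands s) \<ge> 2"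
    moreover have "length (summands s) \<noteq> 0" using summands_ne[of s] by simp
    ultimately have "length (summands s) = 1" by linarith
    then obtain x where "summands s = [x]" by (auto simp: length_Suc_conv)
    then show False using r by (simp add: sort_by_def)
  qed
  moreover have "isAdd s" using calculation summands_nonAdd by fastforce
  ultimately show ?thesis using r by blast
qed

lemma ctx_nonpf: "ctx_step R s t \<Longrightarrow> (\<And>a b. R a b \<Longrightarrow> isAdd a) \<Longrightarrow> \<not> plus_free s"
proof (induction rule: ctx_step.induct)
  case (root s t)
  then have "isAdd s" by blast
  then show ?case by (cases s) auto
qed auto

lemma ctx1:
  "ctx_step (rules ges lam {1}) s t \<Longrightarrow> sum_ok s \<Longrightarrow> sum_ok t \<and> isAdd t
    \<and> (Cst 0 \<in> set (summands t) \<longrightarrow> Cst 0 \<in> set (summands s)) \<and> (srtd ges s \<longrightarrow> srtd ges t)"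
proof (induction rule: ctx_step.induct)
  case (root s t)
  then have sh: "isAdd s \<and> t = mk_sum (sort_by (ge_p ges) (summands s)) \<and> length (summands s) \<ge> 2"
    using rule1_shape by (simp add: rules_def) blast
  have ne: "sort_by (ge_p ges) (summands s) \<noteq> []" using sh by (metis length_sort list.size(3) not_numeral_le_zero)
  have nA: "\<forall>x\<in>set (sort_by (ge_p ges) (summands s)). \<not> isAdd x" using summands_elem by fastforce
  have st: "summands t = sort_by (ge_p ges) (summands s)" using sh summands_mk_sum_id[OF ne nA] by simp
  have "\<forall>x\<in>set (sort_by (ge_p ges) (summands s)). sum_ok x"
    using sum_ok_summands[OF root.prems] fac_ok_sum_ok by auto
  then have "sum_ok t" using sh sum_ok_mk_sum[of "sort_by (ge_p ges) (summands s)"] by simp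
  moreover have "srtd ges s \<longrightarrow> srtd ges t"
  proof
    assume "srtd ges s"
    then have "\<forall>x\<in>set (sort_by (ge_p ges) (summands s)). srtd ges x" using srtd_summands by auto
    then show "srtd ges t" using sh srtd_mk_sum by metis
  qed
  moreover have "isAdd t" using sh mk_sum_isAdd[of "sort_by (ge_p ges) (summands s)"] by simp
  ultimately show ?case using st by simp
next
  case (mul_l s t u)
  have "\<not> plus_free s" using ctx_nonpf[OF mul_l.hyps] rule1_shape by (auto simp: rules_def)
  then show ?case using mul_l.prems fac_ok_plus_free by auto
next
  case (mul_r s t u)
  have "\<not> plus_free s" using ctx_nonpf[OF mul_r.hyps] rule1_shape by (auto simp: rules_def)
  then show ?case using mul_r.prems fac_ok_plus_free by auto
next
  case (aff s t f)
  have "\<not> plus_free s" using ctx_nonpf[OF aff.hyps] rule1_shape by (auto simp: rules_def)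
  then show ?case using aff.prems fac_ok_plus_free by auto
qed auto

lemma steps1_inv:
  assumes tor: "total_order_rel ges"
    and "(rstep (rules ges lam {1}))\<^sup>*\<^sup>* s t" "sum_ok s \<and> Zp s \<and> srtd ges s"
  shows "sum_ok t \<and> Zp t \<and> srtd ges t"
proof -
  have h1: "sum_ok s' \<and> Zp s' \<and> srtd ges s'" if "aeq s s'" "sum_ok s \<and> Zp s \<and> srtd ges s" for s s' :: "('a, 'b, 'c) trm"
    using that aeq_ok aeq_Zp aeq_srtd[OF tor] by blast
  have h2: "sum_ok t \<and> Zp t \<and> srtd ges t" if c: "ctx_step (rules ges lam {1}) s t"
     and p: "sum_ok s \<and> Zp s \<and> srtd ges s" for s t :: "('a, 'b, 'c) trm"
  proof -
    have c1: "sum_ok t \<and> isAdd t \<and> (Cst 0 \<in> set (summands t) \<longrightarrow> Cst 0 \<in> set (summands s)) \<and> (srtd ges s \<longrightarrow> srtd ges t)"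
      using ctx1[OF c] p by blast
    have "Zp t" unfolding Zp_def
    proof
      assume "Cst 0 \<in> set (summands t)"
      then have "s = Cst 0" using c1 p by (simp add: Zp_def)
      then have "\<not> plus_free s \<Longrightarrow> False" by simp
      then show "t = Cst 0" using ctx_nonpf[OF c] rule1_shape by (auto simp: rules_def)
    qed
    then show ?thesis using c1 p by blast
  qed
  show ?thesis by (rule inv_rstep[of "\<lambda>x. sum_ok x \<and> Zp x \<and> srtd ges x", OF h1 h2 assms(2) assms(3)])
qed

lemma is_monomial_summand:
  fixes s :: "('c::field, 'v, 'f) trm"
  assumes "sum_ok s" "Zp s" "isAdd s" "m \<in> set (summands s)"
  shows "is_monomial m"
proof -
  have fm: "fac_ok m" using sum_ok_summands assms by blast
  have m0: "m \<noteq> Cst 0" using assms by (auto simp: Zp_def)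
  have "\<forall>a\<in>set (factors m). is_factor a \<and> a \<noteq> Cst 0"
  proof (cases "isMul m")
    case True then show ?thesis using fac_ok_factor_is_factor[OF fm] fac_ok_factors_cst[OF fm] by blast
  next
    case False then show ?thesis using factors_nonMul[OF False] fac_ok_is_factor[OF fm False] m0 by simp
  qed
  then show ?thesis by (simp add: is_monomial_def)
qed

lemma monomial_MA: "is_monomial m \<Longrightarrow> m \<in> {m. \<forall>x\<in>set (factors m). is_factor x}"
  by (simp add: is_monomial_def)

lemma nf1_sorted:
  fixes s :: "('c::field, 'v, 'f) trm"
  assumes tor: "total_order_rel ges" and nf: "is_nf (rules ges lam {1}) s" and ok: "sum_ok s" "Zp s"
  shows "sorted_wrt (ge_p ges) (summands s)"
proof (cases "isAdd s")
  case False then show ?thesis by (simp add: summands_nonAdd)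
next
  case True
  have mon: "\<forall>m\<in>set (summands s). is_monomial m" using is_monomial_summand[OF ok True] by blast
  then have sub: "set (summands s) \<subseteq> {m. \<forall>x\<in>set (factors m). is_factor x}" using monomial_MA by blast
  show ?thesis
  proof (rule ccontr)
    assume "\<not> sorted_wrt (ge_p ges) (summands s)"
    then have "sort_by (ge_p ges) (summands s) \<noteq> summands s" using sort_id_iff[OF tpo_MA[OF tor] sub] by blast
    then have "rule ges lam 1 s (mk_sum (sort_by (ge_p ges) (summands s)))" using mon by (simp add: rule_def)
    then show False using nf_rule[OF nf, of 1] by blast
  qed
qed

lemma pf_srtS: "plus_free s \<Longrightarrow> srtS ges s"
  by (induction s) auto

lemma srtS_iff: "sum_ok s \<Longrightarrow> srtS ges s \<longleftrightarrow> sorted_wrt (ge_p ges) (filter nz (summands s))"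
proof (induction s)
  case (Add a b)
  then show ?case by (auto simp: sorted_wrt_append)
qed (auto intro: pf_srtS dest: fac_ok_plus_free)

lemma Zp_filter: "Zp s \<Longrightarrow> s \<noteq> Cst 0 \<Longrightarrow> filter nz (summands s) = summands s"
  unfolding Zp_def nz_def by (simp add: filter_id_conv) blast

lemma Zp_nonAdd: "\<not> isAdd x \<Longrightarrow> Zp x"
  by (simp add: Zp_def summands_nonAdd)
lemma pf_nonAdd: "plus_free x \<Longrightarrow> \<not> isAdd x"
  by (cases x) auto
lemma Zp_sub: "sum_ok (Mul a b) \<Longrightarrow> Zp a \<and> Zp b"
proof -
  assume "sum_ok (Mul a b)"
  then have "fac_ok a" "fac_ok b" by auto
  then show ?thesis using fac_ok_plus_free pf_nonAdd Zp_nonAdd by blast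
qed

definition phase3 where
  "phase3 ges s = (if sorted_wrt (ge_p ges) (summands s) then s else mk_sum (sort_by (ge_p ges) (summands s)))"

lemma srtS_nf1:
  assumes tor: "total_order_rel ges"
  shows "srtS ges s \<and> Zp s \<and> sum_ok s \<Longrightarrow> is_nf (rules ges lam {1}) s"
proof (rule nf_by_inv[where P = "\<lambda>x. srtS ges x \<and> Zp x \<and> sum_ok x"])
  fix s s' :: "('a, 'b, 'c) trm" assume "aeq s s'" "srtS ges s \<and> Zp s \<and> sum_ok s"
  then show "srtS ges s' \<and> Zp s' \<and> sum_ok s'" using aeq_srtS[OF tor] aeq_Zp aeq_ok by blast
next
  fix a b :: "('a, 'b, 'c) trm" assume "srtS ges (Add a b) \<and> Zp (Add a b) \<and> sum_ok (Add a b)"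
  then show "(srtS ges a \<and> Zp a \<and> sum_ok a) \<and> srtS ges b \<and> Zp b \<and> sum_ok b" by (auto simp: Zp_def)
next
  fix a b :: "('a, 'b, 'c) trm" assume h: "srtS ges (Mul a b) \<and> Zp (Mul a b) \<and> sum_ok (Mul a b)"
  then have "Zp a \<and> Zp b" using Zp_sub by blast
  then show "(srtS ges a \<and> Zp a \<and> sum_ok a) \<and> srtS ges b \<and> Zp b \<and> sum_ok b" using h fac_ok_sum_ok by auto
next
  fix f a assume h: "srtS ges (Aff f a) \<and> Zp (Aff f a) \<and> sum_ok (Aff f a)"
  then have "fac_ok a" by simp
  then have "plus_free a" by (rule fac_ok_plus_free)
  then have "\<not> isAdd a" by (cases a) auto
  then have "Zp a" by (simp add: Zp_def summands_nonAdd)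
  then show "srtS ges a \<and> Zp a \<and> sum_ok a" using h fac_ok_sum_ok by auto
next
  fix s t assume h: "srtS ges s \<and> Zp s \<and> sum_ok s" "rules ges lam {1} s t"
  then have sh: "isAdd s" "sort_by (ge_p ges) (summands s) \<noteq> summands s" using rule1_shape by (auto simp: rules_def)
  have "s \<noteq> Cst 0" using sh by auto
  then have "filter nz (summands s) = summands s" using Zp_filter h by blast
  then have "sorted_wrt (ge_p ges) (summands s)" using srtS_iff h by metis
  then show False using sh sort_sorted by metis
qed auto



lemma phase3_ok:
  fixes s :: "('c::field, 'v, 'f) trm"
  assumes tor: "total_order_rel ges" and ok: "sum_ok s" "Zp s"
  shows "(rstep (rules ges lam {1}))\<^sup>*\<^sup>* s (phase3 ges s) \<and> is_nf (rules ges lam {1}) (phase3 ges s)"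
proof (cases "sorted_wrt (ge_p ges) (summands s)")
  case True
  then have "srtS ges s" using srtS_iff[OF ok(1)] sorted_wrt_filter by blast
  then show ?thesis using True srtS_nf1[OF tor] ok by (simp add: phase3_def)
next
  case False
  then have aS: "isAdd s" by (cases s) auto
  have mon: "\<forall>m\<in>set (summands s). is_monomial m" using is_monomial_summand[OF ok aS] by blast
  then have sub: "set (summands s) \<subseteq> {m. \<forall>x\<in>set (factors m). is_factor x}" using monomial_MA by blast
  have neq: "sort_by (ge_p ges) (summands s) \<noteq> summands s" using False sort_id_iff[OF tpo_MA[OF tor] sub] by blast
  define t where "t = mk_sum (sort_by (ge_p ges) (summands s))"
  have r: "rules ges lam {1} s t" using mon neq unfolding t_def by (simp add: rules_def rule_def)
  have c1: "sum_ok t \<and> isAdd t \<and> (Cst 0 \<in> set (summands t) \<longrightarrow> Cst 0 \<in> set (summands s))"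
    using ctx1[OF ctx_step.root[of "rules ges lam {1}" s t, OF r] ok(1)] by blast
  have Zt: "Zp t" using c1 ok(2) aS by (auto simp: Zp_def)
  have ne: "sort_by (ge_p ges) (summands s) \<noteq> []" by (metis length_sort length_0_conv summands_ne)
  have nA: "\<forall>x\<in>set (sort_by (ge_p ges) (summands s)). \<not> isAdd x" using summands_elem by fastforce
  have st: "summands t = sort_by (ge_p ges) (summands s)" unfolding t_def using summands_mk_sum_id[OF ne nA] .
  have "sorted_wrt (ge_p ges) (summands t)" unfolding st by (rule sorted_sort[OF tpo_MA[OF tor] sub])
  then have "srtS ges t" using srtS_iff c1 sorted_wrt_filter by blast
  then have "is_nf (rules ges lam {1}) t" using srtS_nf1[OF tor] Zt c1 by blast
  moreover have "phase3 ges s = t" using False unfolding phase3_def t_def by simp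
  ultimately show ?thesis using rstep_root[of "rules ges lam {1}" s t, OF r] by simp
qed

lemma r367_isAdd: "rules ges lam {3, 6, 7} a b \<Longrightarrow> isAdd a"
  by (auto simp: rules_def rule_def)

lemma ctx367:
  "ctx_step (rules ges lam {3, 6, 7}) s t \<Longrightarrow> sum_ok s \<Longrightarrow> sum_ok t \<and> (srtd ges s \<longrightarrow> srtd ges t)
    \<and> set (filter nz (summands t)) \<subseteq> set (filter nz (summands s))
    \<and> (sorted_wrt (ge_p ges) (filter nz (summands s)) \<longrightarrow> sorted_wrt (ge_p ges) (filter nz (summands t)))"
proof (induction rule: ctx_step.induct)
  case (root s t)
  then have "rule ges lam 3 s t \<or> rule ges lam 6 s t \<or> rule ges lam 7 s t" by (auto simp: rules_def)
  then show ?case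
  proof (elim disjE)
    assume "rule ges lam 3 s t"
    then obtain u where "s = Add u u" "t = Cst 0" by (auto simp: rule_def)
    then show ?thesis by (simp add: nz_def)
  next
    assume "rule ges lam 6 s t"
    then have "s = Add t (Cst 0)" by (simp add: rule_def)
    then show ?thesis using root.prems by (simp add: nz_def)
  next
    assume "rule ges lam 7 s t"
    then have "s = Add (Cst 0) t" by (simp add: rule_def)
    then show ?thesis using root.prems by (simp add: nz_def)
  qed
next
  case (add_l s t u)
  then show ?case by (auto simp: sorted_wrt_append)
next
  case (add_r s t u)
  then show ?case by (auto simp: sorted_wrt_append)
next
  case (mul_l s t u)
  have "\<not> plus_free s" using ctx_nonpf[OF mul_l.hyps] r367_isAdd by blast
  then show ?case using mul_l.prems fac_ok_plus_free by auto
next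
  case (mul_r s t u)
  have "\<not> plus_free s" using ctx_nonpf[OF mul_r.hyps] r367_isAdd by blast
  then show ?case using mul_r.prems fac_ok_plus_free by auto
next
  case (aff s t f)
  have "\<not> plus_free s" using ctx_nonpf[OF aff.hyps] r367_isAdd by blast
  then show ?case using aff.prems fac_ok_plus_free by auto
qed

lemma steps367_inv:
  assumes tor: "total_order_rel ges"
    and "(rstep (rules ges lam {3, 6, 7}))\<^sup>*\<^sup>* s t" "sum_ok s \<and> srtd ges s \<and> srtS ges s"
  shows "sum_ok t \<and> srtd ges t \<and> srtS ges t"
proof -
  have h1: "sum_ok s' \<and> srtd ges s' \<and> srtS ges s'" if "aeq s s'" "sum_ok s \<and> srtd ges s \<and> srtS ges s" for s s' :: "('a, 'b, 'c) trm"
    using that aeq_ok aeq_srtd[OF tor] aeq_srtS[OF tor] by blast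
  have h2: "sum_ok t \<and> srtd ges t \<and> srtS ges t" if c: "ctx_step (rules ges lam {3, 6, 7}) s t"
     and p: "sum_ok s \<and> srtd ges s \<and> srtS ges s" for s t :: "('a, 'b, 'c) trm"
    using ctx367[OF c] p srtS_iff by metis
  show ?thesis by (rule inv_rstep[of "\<lambda>x. sum_ok x \<and> srtd ges x \<and> srtS ges x", OF h1 h2 assms(2) assms(3)])
qed

lemma nf367_Zp:
  fixes s :: "('c::field, 'v, 'f) trm"
  shows "is_nf (rules ges lam {3, 6, 7}) s \<Longrightarrow> Zp s"
proof (induction s)
  case (Add a b)
  have ia: "Zp a" and ib: "Zp b" using Add nf_add by blast+
  have "a \<noteq> Cst 0" using nf_rule[OF Add.prems, of 7 b] by (auto simp: rule_def)
  moreover have "b \<noteq> Cst 0" using nf_rule[OF Add.prems, of 6 a] by (auto simp: rule_def)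
  ultimately have "Cst 0 \<notin> set (summands a)" "Cst 0 \<notin> set (summands b)" using ia ib by (auto simp: Zp_def)
  then show ?case by (auto simp: Zp_def)
qed (auto intro: Zp_nonAdd)

lemma nrm_in_nrm_summands: "y \<in> set (map nrm (summands s)) \<Longrightarrow> nrm y = y \<and> \<not> isAdd y"
  using summands_elem by fastforce

lemma nf367_adj:
  fixes s :: "('c::field, 'v, 'f) trm"
  assumes nf: "is_nf (rules ges lam {3, 6, 7}) s"
  shows "\<not> (\<exists>A x B. map nrm (summands s) = A @ [x, x] @ B)"
proof
  assume "\<exists>A x B. map nrm (summands s) = A @ [x, x] @ B"
  then obtain A x B where e: "map nrm (summands s) = A @ [x, x] @ B" by blast
  have el: "\<forall>y\<in>set (A @ [x, x] @ B). nrm y = y \<and> \<not> isAdd y" using nrm_in_nrm_summands e by metis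
  define s2 where "s2 = mk_sum (A @ [Add x x] @ B)"
  have "summands s2 = concat (map summands (A @ [Add x x] @ B))" unfolding s2_def by (simp add: summands_mk_sum)
  also have "\<dots> = A @ [x, x] @ B" using el by (simp add: concat_summands_id summands_nonAdd)
  finally have "map nrm (summands s2) = map nrm (summands s)" using el e by (simp add: map_idI)
  then have "nrm s2 = nrm s" by (rule nrm_eq_by_summands)
  then have a: "aeq s s2" using aeq_iff by metis
  have "rules ges lam {3, 6, 7} (Add x x) (Cst 0)" by (simp add: rules_def rule_def)
  then have "ctx_step (rules ges lam {3, 6, 7}) s2 (mk_sum (A @ [Cst 0] @ B))" unfolding s2_def by (rule ctx_in_mk_sum)
  then have "rstep (rules ges lam {3, 6, 7}) s (mk_sum (A @ [Cst 0] @ B))" unfolding rstep_def using a aeq_refl by blast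
  then show False using nf unfolding is_nf_def by blast
qed

section \<open>Antisymmetry\<close>

lemma hs_atom_eq: "hs x = Some s \<Longrightarrow> hs y = Some s \<Longrightarrow> (\<forall>f. s \<noteq> SAff f) \<Longrightarrow> x = y"
  by (cases x; cases y) auto

lemma list_all2_mono_set: "list_all2 P xs ys \<Longrightarrow> (\<And>a b. a \<in> set xs \<Longrightarrow> b \<in> set ys \<Longrightarrow> P a b \<Longrightarrow> Q a b) \<Longrightarrow> list_all2 Q xs ys"
  by (induction xs ys rule: list_all2_induct) auto

lemma list_all2_nrm: "list_all2 (\<lambda>a b. nrm a = nrm b) xs ys \<Longrightarrow> map nrm xs = map nrm ys"
  by (induction xs ys rule: list_all2_induct) auto

lemma ge_l_antisym_aux:
  fixes ges :: "('c::field, 'v, 'f) sym \<Rightarrow> ('c, 'v, 'f) sym \<Rightarrow> bool"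
  assumes tor: "total_order_rel ges"
  shows "\<forall>x y. dep x \<le> n \<longrightarrow> is_factor x \<longrightarrow> is_factor y \<longrightarrow> srtd ges x \<longrightarrow> srtd ges y \<longrightarrow>
           ge_l ges x y \<longrightarrow> ge_l ges y x \<longrightarrow> nrm x = nrm y"
proof (induction n)
  case 0
  show ?case
  proof (intro allI impI)
    fix x y :: "('c, 'v, 'f) trm"
    assume h: "dep x \<le> 0" "is_factor x" "is_factor y" "srtd ges x" "srtd ges y" "ge_l ges x y" "ge_l ges y x"
    obtain s where s: "hs x = Some s" using is_factor_hs[OF h(2)] by auto
    obtain s' where s': "hs y = Some s'" using is_factor_hs[OF h(3)] by auto
    have "s = s'" using ge_l_some[OF tor s s'] ge_l_some[OF tor s' s] h tor_antisym[OF tor] by auto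
    moreover have "\<forall>f. s \<noteq> SAff f" using h(1) s by (cases x) auto
    ultimately show "nrm x = nrm y" using hs_atom_eq s s' by metis
  qed
next
  case (Suc n)
  show ?case
  proof (intro allI impI)
    fix x y :: "('c, 'v, 'f) trm"
    assume h: "dep x \<le> Suc n" "is_factor x" "is_factor y" "srtd ges x" "srtd ges y" "ge_l ges x y" "ge_l ges y x"
    obtain s where s: "hs x = Some s" using is_factor_hs[OF h(2)] by auto
    obtain s' where s': "hs y = Some s'" using is_factor_hs[OF h(3)] by auto
    have ss: "s = s'" using ge_l_some[OF tor s s'] ge_l_some[OF tor s' s] h tor_antisym[OF tor] by auto
    have aa: "argge ges x y" "argge ges y x" using ge_l_some[OF tor s s'] ge_l_some[OF tor s' s] h ss by auto
    show "nrm x = nrm y"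
    proof (cases "\<exists>f. s = SAff f")
      case False then show ?thesis using hs_atom_eq s s' ss by metis
    next
      case True
      then obtain f where f: "s = SAff f" by blast
      have hx: "hs x = Some (SAff f)" using s f by simp
      have hy: "hs y = Some (SAff f)" using s' f ss by simp
      obtain t where t: "x = Aff f t" using hs_SAff[OF hx] by (elim exE)
      obtain u where u: "y = Aff f u" using hs_SAff[OF hy] by (elim exE)
      have pt: "plus_free t" "plus_free u" using h(2,3) t u by auto
      have sdt: "srtd ges t" "srtd ges u" using h(4,5) t u by auto
      have so: "sort_by (ge_l ges) (factors t) = factors t" "sort_by (ge_l ges) (factors u) = factors u"
        using sort_sorted srtd_sorted sdt by blast+
      have "lex_ge (ge_l ges) (factors t) (factors u)" "lex_ge (ge_l ges) (factors u) (factors t)"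
        using aa t u so by (simp_all add: argge_def)
      then have la: "list_all2 (\<lambda>a b. ge_l ges a b \<and> ge_l ges b a) (factors t) (factors u)" by (rule lex_tie)
      have "list_all2 (\<lambda>a b. nrm a = nrm b) (factors t) (factors u)"
      proof (rule list_all2_mono_set[OF la])
        fix a b assume ab: "a \<in> set (factors t)" "b \<in> set (factors u)" "ge_l ges a b \<and> ge_l ges b a"
        have "dep a \<le> n" using dep_factors[OF ab(1)] h(1) t by simp
        moreover have "is_factor a" "is_factor b" using plus_free_factors pt ab by blast+
        moreover have "srtd ges a" "srtd ges b" using srtd_factors sdt ab by blast+
        ultimately show "nrm a = nrm b" using Suc.IH ab by blast
      qed
      then have "map nrm (factors t) = map nrm (factors u)" by (rule list_all2_nrm)
      then have "nrm t = nrm u" by (rule nrm_eq_by_factors)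
      then show ?thesis using t u by simp
    qed
  qed
qed

lemma ge_l_antisym:
  fixes ges :: "('c::field, 'v, 'f) sym \<Rightarrow> ('c, 'v, 'f) sym \<Rightarrow> bool"
  assumes tor: "total_order_rel ges"
  shows "is_factor x \<Longrightarrow> is_factor y \<Longrightarrow> srtd ges x \<Longrightarrow> srtd ges y \<Longrightarrow>
           ge_l ges x y \<Longrightarrow> ge_l ges y x \<Longrightarrow> nrm x = nrm y"
  using ge_l_antisym_aux[OF tor, of "dep x"] by blast

lemma ge_p_antisym:
  fixes ges :: "('c::field, 'v, 'f) sym \<Rightarrow> ('c, 'v, 'f) sym \<Rightarrow> bool"
  assumes tor: "total_order_rel ges"
    and m: "\<forall>x\<in>set (factors m1). is_factor x" "\<forall>x\<in>set (factors m2). is_factor x"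
    and sd: "srtd ges m1" "srtd ges m2" and g: "ge_p ges m1 m2" "ge_p ges m2 m1"
  shows "nrm m1 = nrm m2"
proof -
  have so: "sort_by (ge_l ges) (factors m1) = factors m1" "sort_by (ge_l ges) (factors m2) = factors m2"
    using sort_sorted srtd_sorted sd by blast+
  have "lex_ge (ge_l ges) (factors m1) (factors m2)" "lex_ge (ge_l ges) (factors m2) (factors m1)"
    using g so by (simp_all add: ge_p_def)
  then have la: "list_all2 (\<lambda>a b. ge_l ges a b \<and> ge_l ges b a) (factors m1) (factors m2)" by (rule lex_tie)
  have "list_all2 (\<lambda>a b. nrm a = nrm b) (factors m1) (factors m2)"
  proof (rule list_all2_mono_set[OF la])
    fix a b assume ab: "a \<in> set (factors m1)" "b \<in> set (factors m2)" "ge_l ges a b \<and> ge_l ges b a"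
    have "is_factor a" "is_factor b" using m ab by blast+
    moreover have "srtd ges a" "srtd ges b" using srtd_factors sd ab by blast+
    ultimately show "nrm a = nrm b" using ge_l_antisym[OF tor] ab by blast
  qed
  then have "map nrm (factors m1) = map nrm (factors m2)" by (rule list_all2_nrm)
  then show ?thesis by (rule nrm_eq_by_factors)
qed

lemma NBR_nonAdd: assumes "\<not> isAdd x" shows "NBR x"
  unfolding NBR_def
proof (clarify)
  fix A L B assume "L \<noteq> []" "map nrm (summands x) = A @ L @ L @ B"
  then have "length (map nrm (summands x)) \<ge> 2" by (cases L) auto
  then show False using summands_nonAdd[OF assms] by simp
qed

lemma NBR_final:
  fixes s :: "('c::field, 'v, 'f) trm"
  assumes tor: "total_order_rel ges" and ok: "sum_ok s" "srtd ges s"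
    and so: "sorted_wrt (ge_p ges) (summands s)"
    and adj: "\<not> (\<exists>A x B. map nrm (summands s) = A @ [x, x] @ B)"
  shows "NBR s"
  unfolding NBR_def
proof
  assume "\<exists>A L B. L \<noteq> [] \<and> map nrm (summands s) = A @ L @ L @ B"
  then obtain A L B where L: "L \<noteq> []" and e: "map nrm (summands s) = A @ L @ L @ B" by blast
  obtain l1 L1 where L1: "L = l1 # L1" using L by (cases L) auto
  show False
  proof (cases L1)
    case Nil
    then show False using adj e L1 by auto
  next
    case (Cons l2 L2)
    have sN: "sorted_wrt (ge_p ges) (map nrm (summands s))" using sorted_p_nrm[OF tor] so by blast
    then have sN': "sorted_wrt (ge_p ges) (l1 # l2 # L2 @ l1 # l2 # L2 @ B)" using e L1 Cons by (simp add: sorted_wrt_append)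
    then have g1: "ge_p ges l1 l2" and g2: "ge_p ges l2 l1" by auto
    have "l1 \<in> set (map nrm (summands s))" "l2 \<in> set (map nrm (summands s))" using e L1 Cons by auto
    then obtain m1 m2 where mm: "m1 \<in> set (summands s)" "m2 \<in> set (summands s)" "l1 = nrm m1" "l2 = nrm m2" by auto
    have fm: "fac_ok m1" "fac_ok m2" using sum_ok_summands ok mm by blast+
    have "\<forall>x\<in>set (factors m1). is_factor x" "\<forall>x\<in>set (factors m2). is_factor x"
      using fac_ok_factor_is_factor fm by blast+
    moreover have "srtd ges m1" "srtd ges m2" using srtd_summands ok mm by blast+
    moreover have "ge_p ges m1 m2" "ge_p ges m2 m1" using g1 g2 mm ge_p_nrm[OF tor] by metis+
    ultimately have "nrm m1 = nrm m2" by (rule ge_p_antisym[OF tor])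
    then have "l1 = l2" using mm by simp
    then have "map nrm (summands s) = A @ [l1, l1] @ (L2 @ L @ B)" using e L1 Cons by simp
    then show False using adj by blast
  qed
qed



lemma NBR_add: "NBR (Add a b) \<Longrightarrow> NBR a \<and> NBR b"
proof -
  assume h: "NBR (Add a b)"
  have "NBR a" unfolding NBR_def
  proof (clarify)
    fix A L B assume "L \<noteq> []" "map nrm (summands a) = A @ L @ L @ B"
    then have "map nrm (summands (Add a b)) = A @ L @ L @ (B @ map nrm (summands b))" by simp
    then show False using h \<open>L \<noteq> []\<close> unfolding NBR_def by blast
  qed
  moreover have "NBR b" unfolding NBR_def
  proof (clarify)
    fix A L B assume "L \<noteq> []" "map nrm (summands b) = A @ L @ L @ B"
    then have "map nrm (summands (Add a b)) = (map nrm (summands a) @ A) @ L @ L @ B" by simp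
    then show False using h \<open>L \<noteq> []\<close> unfolding NBR_def by blast
  qed
  ultimately show ?thesis ..
qed

lemma other_rules_excluded:
  fixes s :: "('c::field, 'v, 'f) trm"
  assumes "rule ges lam i s t" "i \<in> {4..13}" "sum_ok s" "Zp s"
  shows False
proof -
  have "i = 4 \<or> i = 5 \<or> i = 6 \<or> i = 7 \<or> i = 8 \<or> i = 9 \<or> i = 10 \<or> i = 11 \<or> i = 12 \<or> i = 13"
    using assms(2) by (simp add: atLeastAtMost_iff) presburger
  then show False using assms(1,3,4) by (elim disjE) (auto simp: rule_def Zp_def)
qed

lemma final_nf:
  fixes s :: "('c::field, 'v, 'f) trm"
  assumes tor: "total_order_rel ges"
  shows "sum_ok s \<and> Zp s \<and> srtd ges s \<and> srtS ges s \<and> NBR s \<Longrightarrow> is_nf (Delta ges lam) s"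
proof (rule nf_by_inv[where P = "\<lambda>x. sum_ok x \<and> Zp x \<and> srtd ges x \<and> srtS ges x \<and> NBR x"])
  fix s s' :: "('c, 'v, 'f) trm" assume "aeq s s'" "sum_ok s \<and> Zp s \<and> srtd ges s \<and> srtS ges s \<and> NBR s"
  then show "sum_ok s' \<and> Zp s' \<and> srtd ges s' \<and> srtS ges s' \<and> NBR s'"
    using aeq_ok aeq_Zp aeq_srtd[OF tor] aeq_srtS[OF tor] aeq_NBR by blast
next
  fix a b :: "('c, 'v, 'f) trm" assume h: "sum_ok (Add a b) \<and> Zp (Add a b) \<and> srtd ges (Add a b) \<and> srtS ges (Add a b) \<and> NBR (Add a b)"
  have "Zp a" "Zp b" using h by (auto simp: Zp_def)
  then show "(sum_ok a \<and> Zp a \<and> srtd ges a \<and> srtS ges a \<and> NBR a) \<and> sum_ok b \<and> Zp b \<and> srtd ges b \<and> srtS ges b \<and> NBR b"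
    using h NBR_add by auto
next
  fix a b :: "('c, 'v, 'f) trm" assume h: "sum_ok (Mul a b) \<and> Zp (Mul a b) \<and> srtd ges (Mul a b) \<and> srtS ges (Mul a b) \<and> NBR (Mul a b)"
  have f: "fac_ok a" "fac_ok b" using h by auto
  then have "\<not> isAdd a" "\<not> isAdd b" using fac_ok_plus_free pf_nonAdd by blast+
  then have "NBR a" "NBR b" "Zp a" "Zp b" using NBR_nonAdd Zp_nonAdd by blast+
  then show "(sum_ok a \<and> Zp a \<and> srtd ges a \<and> srtS ges a \<and> NBR a) \<and> sum_ok b \<and> Zp b \<and> srtd ges b \<and> srtS ges b \<and> NBR b"
    using h f fac_ok_sum_ok by auto
next
  fix f and a :: "('c, 'v, 'f) trm" assume h: "sum_ok (Aff f a) \<and> Zp (Aff f a) \<and> srtd ges (Aff f a) \<and> srtS ges (Aff f a) \<and> NBR (Aff f a)"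
  have fa: "fac_ok a" using h by auto
  then have "\<not> isAdd a" using fac_ok_plus_free pf_nonAdd by blast
  then have "NBR a" "Zp a" using NBR_nonAdd Zp_nonAdd by blast+
  then show "sum_ok a \<and> Zp a \<and> srtd ges a \<and> srtS ges a \<and> NBR a"
    using h fa fac_ok_sum_ok by auto
next
  fix s t :: "('c, 'v, 'f) trm" assume h: "sum_ok s \<and> Zp s \<and> srtd ges s \<and> srtS ges s \<and> NBR s" and r: "Delta ges lam s t"
  then obtain i where i: "i \<in> {1..13}" "rule ges lam i s t" by (auto simp: rules_def)
  show False
  proof (cases "i = 1")
    case True
    then have sh: "isAdd s" "sort_by (ge_p ges) (summands s) \<noteq> summands s" using rule1_shape i by blast+
    have "s \<noteq> Cst 0" using sh by auto
    then have "filter nz (summands s) = summands s" using Zp_filter h by blast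
    then have "sorted_wrt (ge_p ges) (summands s)" using srtS_iff h by metis
    then show False using sh sort_sorted by metis
  next
    case n1: False
    show False
    proof (cases "i = 2")
      case True
      then have "sort_by (ge_l ges) (factors s) \<noteq> factors s" using rule2_shape i by blast
      then show False using sort_sorted srtd_sorted h by metis
    next
      case n2: False
      show False
      proof (cases "i = 3")
        case True
        then obtain u where u: "s = Add u u" using i by (auto simp: rule_def)
        have "map nrm (summands s) = [] @ map nrm (summands u) @ map nrm (summands u) @ []" using u by simp
        moreover have "map nrm (summands u) \<noteq> []" by simp
        ultimately show False using h unfolding NBR_def by blast
      next
        case False
        then have "i \<in> {4..13}" using i n1 n2 by auto
        then show False using other_rules_excluded i h by blast
      qed
    qed
  qed
qed auto

theorem lemma3:
  fixes ges :: "('c::field, 'v, 'f::finite) sym \<Rightarrow> ('c, 'v, 'f) sym \<Rightarrow> bool"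
    and lam :: "'f \<Rightarrow> 'c"
    and \<tau> :: "('c, 'v, 'f) trm"
    and n :: nat
  assumes "0 < n" and "CARD('c) = 2 ^ n"
    and "total_order_rel ges"
  shows "(\<exists>\<tau>'. term_norm ges lam \<tau> \<tau>')
       \<and> (\<forall>\<tau>'. term_norm ges lam \<tau> \<tau>' \<longrightarrow>
             (rstep (Delta ges lam))\<^sup>*\<^sup>* \<tau> \<tau>' \<and> is_nf (Delta ges lam) \<tau>')"
proof
  note tor = assms(3)
  obtain t1 where t1: "(rstep (rules ges lam {3..13}))\<^sup>*\<^sup>* \<tau> t1" "is_nf (rules ges lam {3..13}) t1"
    using nf_exists_rules[of "{3..13}" ges lam \<tau>] by auto
  have ok1: "sum_ok t1" "Zp t1" using nf1_shape[OF t1(2)] by auto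
  define t2 where "t2 = srt ges t1"
  have s2: "(rstep (rule2_inner ges lam))\<^sup>*\<^sup>* t1 t2" "srtd ges t2" using srt_ok[OF tor ok1(1)] unfolding t2_def by auto
  have n2: "is_nf (rule2_inner ges lam) t2"
    using srtd_nf2[OF tor s2(2)] by (rule nf_mono) (auto simp: rule2_inner_def rules_def)
  have ok2: "sum_ok t2 \<and> Zp t2" using steps2_inv[OF s2(1)] ok1 by blast
  define t3 where "t3 = phase3 ges t2"
  have s3: "(rstep (rules ges lam {1}))\<^sup>*\<^sup>* t2 t3" "is_nf (rules ges lam {1}) t3"
    using phase3_ok[OF tor] ok2 unfolding t3_def by blast+
  obtain t4 where t4: "(rstep (rules ges lam {3, 6, 7}))\<^sup>*\<^sup>* t3 t4" "is_nf (rules ges lam {3, 6, 7}) t4"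
    using nf_exists_rules[of "{3, 6, 7}" ges lam t3] by auto
  show "\<exists>\<tau>'. term_norm ges lam \<tau> \<tau>'"
    unfolding term_norm_def using t1 s2(1) n2 s3 t4 by blast
next
  note tor = assms(3)
  show "\<forall>\<tau>'. term_norm ges lam \<tau> \<tau>' \<longrightarrow> (rstep (Delta ges lam))\<^sup>*\<^sup>* \<tau> \<tau>' \<and> is_nf (Delta ges lam) \<tau>'"
  proof (intro allI impI)
    fix t' assume "term_norm ges lam \<tau> t'"
    then obtain t1 t2 t3 where
      a1: "(rstep (rules ges lam {3..13}))\<^sup>*\<^sup>* \<tau> t1" "is_nf (rules ges lam {3..13}) t1" and
      a2: "(rstep (rule2_inner ges lam))\<^sup>*\<^sup>* t1 t2" "is_nf (rule2_inner ges lam) t2" and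
      a3: "(rstep (rules ges lam {1}))\<^sup>*\<^sup>* t2 t3" "is_nf (rules ges lam {1}) t3" and
      a4: "(rstep (rules ges lam {3, 6, 7}))\<^sup>*\<^sup>* t3 t'" "is_nf (rules ges lam {3, 6, 7}) t'"
      unfolding term_norm_def by blast
    have r1: "(rstep (Delta ges lam))\<^sup>*\<^sup>* \<tau> t1" using a1(1) by (rule rsteps_mono) (auto simp: rules_def)
    have r2: "(rstep (Delta ges lam))\<^sup>*\<^sup>* t1 t2" using a2(1) by (rule rsteps_mono) (auto simp: rules_def rule2_inner_def)
    have r3: "(rstep (Delta ges lam))\<^sup>*\<^sup>* t2 t3" using a3(1) by (rule rsteps_mono) (auto simp: rules_def)
    have r4: "(rstep (Delta ges lam))\<^sup>*\<^sup>* t3 t'" using a4(1) by (rule rsteps_mono) (auto simp: rules_def)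
    have ok1: "sum_ok t1" "Zp t1" using nf1_shape[OF a1(2)] by auto
    have ok2: "sum_ok t2 \<and> Zp t2" using steps2_inv[OF a2(1)] ok1 by blast
    have sd2: "srtd ges t2" using nf2_srtd[OF tor a2(2)] ok2 by blast
    have ok3: "sum_ok t3 \<and> Zp t3 \<and> srtd ges t3" using steps1_inv[OF tor a3(1)] ok2 sd2 by blast
    have so3: "sorted_wrt (ge_p ges) (summands t3)" using nf1_sorted[OF tor a3(2)] ok3 by blast
    have sS3: "srtS ges t3" using srtS_iff ok3 so3 sorted_wrt_filter by blast
    have ok4: "sum_ok t' \<and> srtd ges t' \<and> srtS ges t'" using steps367_inv[OF tor a4(1)] ok3 sS3 by blast
    have Z4: "Zp t'" using nf367_Zp[OF a4(2)] .
    have adj: "\<not> (\<exists>A x B. map nrm (summands t') = A @ [x, x] @ B)" using nf367_adj[OF a4(2)] .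
    have so4: "sorted_wrt (ge_p ges) (summands t')"
    proof (cases "t' = Cst 0")
      case True then show ?thesis by simp
    next
      case False
      then have "filter nz (summands t') = summands t'" using Zp_filter Z4 by blast
      then show ?thesis using srtS_iff ok4 by metis
    qed
    have "NBR t'" using NBR_final[OF tor _ _ so4 adj] ok4 by blast
    then have "is_nf (Delta ges lam) t'" using final_nf[OF tor] ok4 Z4 by blast
    moreover have "(rstep (Delta ges lam))\<^sup>*\<^sup>* \<tau> t'" using r1 r2 r3 r4 by (meson rtranclp_trans)
    ultimately show "(rstep (Delta ges lam))\<^sup>*\<^sup>* \<tau> t' \<and> is_nf (Delta ges lam) t'" by blast
  qed
qed


end
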